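(* Let $F$ be an infinite field and $G$ a finite group with identity $e$. Let $M_n(F)$ be endowed with an elementary $G$-grading (induced by some $(g_1,\dots,g_n)\in G^n$) such that $x_e^{(1)}x_e^{(2)}-x_e^{(2)}x_e^{(1)}$ is a graded polynomial identity. If the grading is nondegenerate, then the $T_G$-ideal of graded identities of $M_n(F)$ is generated by the polynomials $x_{e}^{(1)}x_{e}^{(2)}-x_{e}^{(2)}x_{e}^{(1)}$ and $x_{g}^{(1)}x_{g^{-1}}^{(2)}x_{g}^{(3)}-x_{g}^{(3)}x_{g^{-1}}^{(2)}x_{g}^{(1)}$ for $g\neq e$ with $M_n(F)_g\neq0$. Moreover, in this case the grading is strong and $|G|=n$.
   Context: The elementary grading induced by $(g_1,\dots,g_n)$: $M_n(F)_g$ is spanned by the matrix units $e_{ij}$ with $g_i^{-1}g_j=g$. Graded identities are elements of the free associative algebra on variables $x_g^{(i)}$ of degree $g$ vanishing under all degree-respecting substitutions; $T_G$-ideals are ideals invariant under degree-preserving endomorphisms. A $G$-grading on an algebra $A$ is nondegenerate if for every $r$ and every $(h_1,\dots,h_r)\in G^r$ the monomial $x_{h_1}^{(1)}\cdots x_{h_r}^{(r)}$ is not a graded identity of $A$; it is strong if $A_gA_h=A_{gh}$ for all $g,h\in G$. *)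

theory Defs
  imports "HOL-Analysis.Finite_Cartesian_Product" "HOL-Algebra.Group"
begin

(* ---------- Graded free associative algebra ----------
   Variables are pairs (g, i) standing for x_g^{(i)} (g \<in> carrier G, i :: nat).
   A polynomial is a coefficient function on words (lists of variables)
   with finite support. *)

type_synonym ('a,'f) fpoly = "('a \<times> nat) list \<Rightarrow> 'f"

definition fsupp :: "('a,'f::zero) fpoly \<Rightarrow> ('a \<times> nat) list set" where
  "fsupp p = {w. p w \<noteq> 0}"

definition free_alg :: "'a monoid \<Rightarrow> ('a,'f::zero) fpoly set" where
  "free_alg G = {p. finite (fsupp p) \<and> (\<forall>w \<in> fsupp p. fst ` set w \<subseteq> carrier G)}"

definition fmono :: "('a \<times> nat) list \<Rightarrow> ('a,'f::zero_neq_one) fpoly" where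
  "fmono w = (\<lambda>u. if u = w then 1 else 0)"

definition fvar :: "'a \<Rightarrow> nat \<Rightarrow> ('a,'f::zero_neq_one) fpoly" where
  "fvar g i = fmono [(g, i)]"

definition fadd :: "('a,'f::plus) fpoly \<Rightarrow> ('a,'f) fpoly \<Rightarrow> ('a,'f) fpoly" where
  "fadd p q = (\<lambda>w. p w + q w)"

definition fsub :: "('a,'f::minus) fpoly \<Rightarrow> ('a,'f) fpoly \<Rightarrow> ('a,'f) fpoly" where
  "fsub p q = (\<lambda>w. p w - q w)"

definition fsmult :: "'f::times \<Rightarrow> ('a,'f) fpoly \<Rightarrow> ('a,'f) fpoly" where
  "fsmult c p = (\<lambda>w. c * p w)"

definition fmul :: "('a,'f::semiring_0) fpoly \<Rightarrow> ('a,'f) fpoly \<Rightarrow> ('a,'f) fpoly" where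
  "fmul p q = (\<lambda>w. \<Sum>k\<le>length w. p (take k w) * q (drop k w))"

fun fword_subst :: "(('a \<times> nat) \<Rightarrow> ('a,'f::semiring_1) fpoly) \<Rightarrow> ('a \<times> nat) list \<Rightarrow> ('a,'f) fpoly" where
  "fword_subst \<sigma> [] = fmono []"
| "fword_subst \<sigma> (x # xs) = fmul (\<sigma> x) (fword_subst \<sigma> xs)"

definition fsubst :: "(('a \<times> nat) \<Rightarrow> ('a,'f::semiring_1) fpoly) \<Rightarrow> ('a,'f) fpoly \<Rightarrow> ('a,'f) fpoly" where
  "fsubst \<sigma> p = (\<lambda>u. \<Sum>w\<in>fsupp p. p w * fword_subst \<sigma> w u)"

fun wdeg :: "'a monoid \<Rightarrow> ('a \<times> nat) list \<Rightarrow> 'a" where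
  "wdeg G [] = \<one>\<^bsub>G\<^esub>"
| "wdeg G (x # xs) = fst x \<otimes>\<^bsub>G\<^esub> wdeg G xs"

definition homogeneous :: "'a monoid \<Rightarrow> 'a \<Rightarrow> ('a,'f::zero) fpoly \<Rightarrow> bool" where
  "homogeneous G g p \<longleftrightarrow> (\<forall>w \<in> fsupp p. wdeg G w = g)"

definition graded_endo :: "'a monoid \<Rightarrow> (('a \<times> nat) \<Rightarrow> ('a,'f::zero) fpoly) \<Rightarrow> bool" where
  "graded_endo G \<sigma> \<longleftrightarrow> (\<forall>g \<in> carrier G. \<forall>i. \<sigma> (g, i) \<in> free_alg G \<and> homogeneous G g (\<sigma> (g, i)))"

inductive_set TG_ideal_gen :: "'a monoid \<Rightarrow> ('a,'f::comm_ring_1) fpoly set \<Rightarrow> ('a,'f) fpoly set"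
  for G S where
  gen: "s \<in> S \<Longrightarrow> s \<in> TG_ideal_gen G S"
| zero: "(\<lambda>_. 0) \<in> TG_ideal_gen G S"
| add: "p \<in> TG_ideal_gen G S \<Longrightarrow> q \<in> TG_ideal_gen G S \<Longrightarrow> fadd p q \<in> TG_ideal_gen G S"
| smult: "p \<in> TG_ideal_gen G S \<Longrightarrow> fsmult c p \<in> TG_ideal_gen G S"
| lmul: "q \<in> free_alg G \<Longrightarrow> p \<in> TG_ideal_gen G S \<Longrightarrow> fmul q p \<in> TG_ideal_gen G S"
| rmul: "q \<in> free_alg G \<Longrightarrow> p \<in> TG_ideal_gen G S \<Longrightarrow> fmul p q \<in> TG_ideal_gen G S"
| endo: "graded_endo G \<sigma> \<Longrightarrow> p \<in> TG_ideal_gen G S \<Longrightarrow> fsubst \<sigma> p \<in> TG_ideal_gen G S"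

definition elem_comp :: "'a monoid \<Rightarrow> ('n \<Rightarrow> 'a) \<Rightarrow> 'a \<Rightarrow> ('f::zero^'n^'n) set" where
  "elem_comp G gs h = {A. \<forall>i j. A $ i $ j \<noteq> 0 \<longrightarrow> inv\<^bsub>G\<^esub> (gs i) \<otimes>\<^bsub>G\<^esub> gs j = h}"

definition msmult :: "'f::times \<Rightarrow> 'f^'n^'n \<Rightarrow> 'f^'n^'n" where
  "msmult c A = (\<chi> i j. c * A $ i $ j)"

fun mword :: "(('a \<times> nat) \<Rightarrow> 'f::semiring_1^'n^'n) \<Rightarrow> ('a \<times> nat) list \<Rightarrow> 'f^'n^'n" where
  "mword \<phi> [] = mat 1"
| "mword \<phi> (x # xs) = \<phi> x ** mword \<phi> xs"

definition meval :: "(('a \<times> nat) \<Rightarrow> 'f::semiring_1^'n^'n) \<Rightarrow> ('a,'f) fpoly \<Rightarrow> 'f^'n^'n" where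
  "meval \<phi> p = (\<Sum>w\<in>fsupp p. msmult (p w) (mword \<phi> w))"

definition graded_assign :: "'a monoid \<Rightarrow> ('n \<Rightarrow> 'a) \<Rightarrow> (('a \<times> nat) \<Rightarrow> 'f::semiring_1^'n^'n) \<Rightarrow> bool" where
  "graded_assign G gs \<phi> \<longleftrightarrow> (\<forall>g \<in> carrier G. \<forall>i. \<phi> (g, i) \<in> elem_comp G gs g)"

definition graded_identity :: "'a monoid \<Rightarrow> ('n::finite \<Rightarrow> 'a) \<Rightarrow> ('a,'f::comm_ring_1) fpoly \<Rightarrow> bool" where
  "graded_identity G gs p \<longleftrightarrow> p \<in> free_alg G \<and>
     (\<forall>\<phi> :: ('a \<times> nat) \<Rightarrow> 'f^'n^'n. graded_assign G gs \<phi> \<longrightarrow> meval \<phi> p = 0)"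

definition nondegenerate :: "'a monoid \<Rightarrow> ('n::finite \<Rightarrow> 'a) \<Rightarrow> 'f::comm_ring_1 itself \<Rightarrow> bool" where
  "nondegenerate G gs TYPE_F \<longleftrightarrow>
     (\<forall>hs. set hs \<subseteq> carrier G \<longrightarrow>
        \<not> graded_identity G gs (fmono (zip hs [1..<Suc (length hs)]) :: ('a,'f) fpoly))"

definition prod_span :: "('f::comm_ring_1^'n^'n) set \<Rightarrow> ('f^'n^'n) set \<Rightarrow> ('f^'n^'n) set" where
  "prod_span U V = {\<Sum>k<m. msmult (c k) (A k ** B k) | (m::nat) c A B. \<forall>k<m. A k \<in> U \<and> B k \<in> V}"

definition strong_grading :: "'a monoid \<Rightarrow> ('n::finite \<Rightarrow> 'a) \<Rightarrow> 'f::comm_ring_1 itself \<Rightarrow> bool" where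
  "strong_grading G gs TYPE_F \<longleftrightarrow>
     (\<forall>g \<in> carrier G. \<forall>h \<in> carrier G.
        prod_span (elem_comp G gs g) (elem_comp G gs h) = (elem_comp G gs (g \<otimes>\<^bsub>G\<^esub> h) :: ('f^'n^'n) set))"

definition comm_e :: "'a monoid \<Rightarrow> ('a,'f::comm_ring_1) fpoly" where
  "comm_e G = fsub (fmul (fvar \<one>\<^bsub>G\<^esub> 1) (fvar \<one>\<^bsub>G\<^esub> 2)) (fmul (fvar \<one>\<^bsub>G\<^esub> 2) (fvar \<one>\<^bsub>G\<^esub> 1))"

definition gen_g :: "'a monoid \<Rightarrow> 'a \<Rightarrow> ('a,'f::comm_ring_1) fpoly" where
  "gen_g G g = fsub (fmul (fvar g 1) (fmul (fvar (inv\<^bsub>G\<^esub> g) 2) (fvar g 3)))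
                    (fmul (fvar g 3) (fmul (fvar (inv\<^bsub>G\<^esub> g) 2) (fvar g 1)))"

end

theory Submission
  imports Defs "HOL-Library.Multiset" "HOL-Computational_Algebra.Polynomial"
begin


lemma fsupp_fmono[simp]: "fsupp (fmono w :: ('a,'f::zero_neq_one) fpoly) = {w}"
  by (auto simp: fsupp_def fmono_def)

lemma fmul_fmono_left:
  "fmul (fmono u :: ('a,'f::semiring_1) fpoly) q =
     (\<lambda>w. if take (length u) w = u then q (drop (length u) w) else 0)"
proof
  fix w :: "('a \<times> nat) list"
  have eq: "\<And>k. k \<in> {..length w} \<Longrightarrow> (fmono u (take k w) :: 'f) * q (drop k w) =
      (if k = length u then (if take (length u) w = u then q (drop (length u) w) else 0) else 0)"
    by (auto simp: fmono_def)
  have "fmul (fmono u) q w = (\<Sum>k\<in>{..length w}. (if k = length u then (if take (length u) w = u then q (drop (length u) w) else 0) else 0))"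
    unfolding fmul_def using eq by (rule sum.cong[OF refl])
  also have "\<dots> = (if take (length u) w = u then q (drop (length u) w) else 0)"
  proof (cases "length u \<le> length w")
    case True then show ?thesis by (simp add: sum.delta)
  next
    case False
    then have "length (take (length u) w) \<noteq> length u" by simp
    then have "take (length u) w \<noteq> u" by metis
    then show ?thesis by simp
  qed
  finally show "fmul (fmono u) q w = (if take (length u) w = u then q (drop (length u) w) else 0)" .
qed

lemma fmono_mul: "fmul (fmono u) (fmono v) = (fmono (u @ v) :: ('a,'f::semiring_1) fpoly)"
proof
  fix w :: "('a \<times> nat) list"
  have "(take (length u) w = u \<and> drop (length u) w = v) = (w = u @ v)"
    using append_eq_conv_conj[of u v w] by auto
  then show "fmul (fmono u) (fmono v) w = (fmono (u @ v) w :: 'f)"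
    unfolding fmul_fmono_left by (auto simp: fmono_def)
qed

lemma fmul_fsub_left: "fmul (fsub p q) r = fsub (fmul p r) (fmul q r :: ('a,'f::comm_ring_1) fpoly)"
  by (auto simp: fmul_def fsub_def left_diff_distrib sum_subtractf)

lemma fmul_fsub_right: "fmul r (fsub p q) = fsub (fmul r p) (fmul r q :: ('a,'f::comm_ring_1) fpoly)"
  by (auto simp: fmul_def fsub_def right_diff_distrib sum_subtractf)

definition lw :: "'a monoid \<Rightarrow> ('a \<times> nat) list \<Rightarrow> bool" where
  "lw G w \<longleftrightarrow> fst ` set w \<subseteq> carrier G"

lemma lw_simps[simp]: "lw G []" "lw G (x # xs) \<longleftrightarrow> fst x \<in> carrier G \<and> lw G xs"
  "lw G (u @ v) \<longleftrightarrow> lw G u \<and> lw G v"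
  by (auto simp: lw_def)

lemma fmono_free_alg: "lw G w \<Longrightarrow> (fmono w :: ('a,'f::zero_neq_one) fpoly) \<in> free_alg G"
  by (simp add: free_alg_def lw_def)

definition weq :: "'a monoid \<Rightarrow> ('a,'f::comm_ring_1) fpoly set \<Rightarrow> 'f itself \<Rightarrow> ('a \<times> nat) list \<Rightarrow> ('a \<times> nat) list \<Rightarrow> bool" where
  "weq G S TYPE_F w w' \<longleftrightarrow> fsub (fmono w) (fmono w') \<in> TG_ideal_gen G S"

lemma J_sub: "p \<in> TG_ideal_gen G S \<Longrightarrow> q \<in> TG_ideal_gen G S \<Longrightarrow> fsub p q \<in> TG_ideal_gen G S"
proof -
  assume p: "p \<in> TG_ideal_gen G S" and q: "q \<in> TG_ideal_gen G S"
  have "fsub p q = fadd p (fsmult (-1) q)" by (auto simp: fsub_def fadd_def fsmult_def)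
  then show ?thesis using p q by (simp add: TG_ideal_gen.add TG_ideal_gen.smult)
qed

lemma weq_refl: "weq G S TYPE('f::comm_ring_1) w w"
proof -
  have "fsub (fmono w) (fmono w) = (\<lambda>_. 0 :: 'f)" by (auto simp: fsub_def)
  then show ?thesis unfolding weq_def by (simp add: TG_ideal_gen.zero)
qed

lemma weq_sym: "weq G S TYPE('f::comm_ring_1) w w' \<Longrightarrow> weq G S TYPE('f) w' w"
proof -
  assume a: "weq G S TYPE('f) w w'"
  have "fsub (fmono w') (fmono w) = fsmult (-1) (fsub (fmono w) (fmono w') :: ('a,'f) fpoly)"
    by (auto simp: fsub_def fsmult_def)
  then show ?thesis using a unfolding weq_def by (simp add: TG_ideal_gen.smult)
qed

lemma weq_trans: "weq G S TYPE('f::comm_ring_1) u v \<Longrightarrow> weq G S TYPE('f) v w \<Longrightarrow> weq G S TYPE('f) u w"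
proof -
  assume a: "weq G S TYPE('f) u v" and b: "weq G S TYPE('f) v w"
  have "fsub (fmono u) (fmono w) = fadd (fsub (fmono u) (fmono v)) (fsub (fmono v) (fmono w) :: ('a,'f) fpoly)"
    by (auto simp: fsub_def fadd_def)
  then show ?thesis using a b unfolding weq_def by (simp add: TG_ideal_gen.add)
qed

lemma weq_ctx: "lw G u \<Longrightarrow> lw G v \<Longrightarrow> weq G S TYPE('f::comm_ring_1) w w' \<Longrightarrow> weq G S TYPE('f) (u @ w @ v) (u @ w' @ v)"
proof -
  assume u: "lw G u" and v: "lw G v" and a: "weq G S TYPE('f) w w'"
  have "fmul (fmono u) (fmul (fsub (fmono w) (fmono w')) (fmono v)) =
        fsub (fmono (u @ w @ v)) (fmono (u @ w' @ v) :: ('a,'f) fpoly)"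
    by (simp add: fmul_fsub_left fmul_fsub_right fmono_mul)
  moreover have "fmul (fmono u) (fmul (fsub (fmono w) (fmono w')) (fmono v)) \<in> TG_ideal_gen G S"
    using a unfolding weq_def
    by (intro TG_ideal_gen.lmul TG_ideal_gen.rmul fmono_free_alg u v)
  ultimately show ?thesis unfolding weq_def by simp
qed

lemma fsubst_fsub_fmono:
  assumes "a \<noteq> b"
  shows "fsubst \<sigma> (fsub (fmono a) (fmono b) :: ('a,'f::comm_ring_1) fpoly) = fsub (fword_subst \<sigma> a) (fword_subst \<sigma> b)"
proof -
  have s: "fsupp (fsub (fmono a) (fmono b) :: ('a,'f) fpoly) = {a, b}"
    using assms by (auto simp: fsupp_def fsub_def fmono_def)
  show ?thesis unfolding fsubst_def s using assms
    by (auto simp: fsub_def fmono_def)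
qed

lemma fword_subst_fmono:
  "(\<And>x. x \<in> set w \<Longrightarrow> \<sigma> x = fmono (\<tau> x)) \<Longrightarrow>
   fword_subst \<sigma> w = (fmono (concat (map \<tau> w)) :: ('a,'f::comm_ring_1) fpoly)"
  by (induction w) (auto simp: fmono_mul)

lemma comm_e_eq: "comm_e G = (fsub (fmono [(\<one>\<^bsub>G\<^esub>,1),(\<one>\<^bsub>G\<^esub>,2)]) (fmono [(\<one>\<^bsub>G\<^esub>,2),(\<one>\<^bsub>G\<^esub>,1)]) :: ('a,'f::comm_ring_1) fpoly)"
  by (simp add: comm_e_def fvar_def fmono_mul)

lemma gen_g_eq: "gen_g G g = (fsub (fmono [(g,1),(inv\<^bsub>G\<^esub> g,2),(g,3)]) (fmono [(g,3),(inv\<^bsub>G\<^esub> g,2),(g,1)]) :: ('a,'f::comm_ring_1) fpoly)"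
  by (simp add: gen_g_def fvar_def fmono_mul)

lemma homogeneous_fmono: "homogeneous G g (fmono w :: ('a,'f::zero_neq_one) fpoly) \<longleftrightarrow> wdeg G w = g"
  by (simp add: homogeneous_def)

lemma wdeg_single: "group G \<Longrightarrow> g \<in> carrier G \<Longrightarrow> wdeg G [(g,i)] = g"
  by (simp add: group.is_monoid monoid.r_one)

lemma R1:
  assumes G: "group G" and cS: "comm_e G \<in> S"
    and s: "lw G s" "wdeg G s = \<one>\<^bsub>G\<^esub>" and t: "lw G t" "wdeg G t = \<one>\<^bsub>G\<^esub>"
  shows "weq G S TYPE('f::comm_ring_1) (s @ t) (t @ s)"
proof -
  define \<tau> where "\<tau> x = (if x = (\<one>\<^bsub>G\<^esub>,1::nat) then s else if x = (\<one>\<^bsub>G\<^esub>,2) then t else [x])" for x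
  define \<sigma> where "\<sigma> x = (fmono (\<tau> x) :: ('a,'f) fpoly)" for x
  have ge: "graded_endo G \<sigma>"
    unfolding graded_endo_def \<sigma>_def
  proof (intro ballI allI conjI)
    fix h i assume h: "h \<in> carrier G"
    have "lw G (\<tau> (h,i))" using s t h by (simp add: \<tau>_def lw_def)
    then show "fmono (\<tau> (h, i)) \<in> free_alg G" by (rule fmono_free_alg)
    have "wdeg G (\<tau> (h,i)) = h" using s t h by (simp add: \<tau>_def monoid.r_one[OF group.is_monoid[OF G] h])
    then show "homogeneous G h (fmono (\<tau> (h, i)) :: ('a,'f) fpoly)" by (simp add: homogeneous_fmono)
  qed
  have "fsubst \<sigma> (comm_e G) \<in> TG_ideal_gen G S"
    by (rule TG_ideal_gen.endo[OF ge TG_ideal_gen.gen[OF cS]])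
  moreover have "fsubst \<sigma> (comm_e G) = fsub (fmono (s @ t)) (fmono (t @ s))"
    unfolding comm_e_eq
    apply (subst fsubst_fsub_fmono)
    subgoal by simp
    apply (simp only: fword_subst.simps \<sigma>_def)
    apply (simp add: \<tau>_def)
    apply (simp add: fmono_mul)
    done
  ultimately show ?thesis unfolding weq_def by simp
qed

lemma R2:
  assumes G: "group G" and g: "g \<in> carrier G" and cS: "gen_g G g \<in> S"
    and s: "lw G s" "wdeg G s = g" and z: "lw G z" "wdeg G z = inv\<^bsub>G\<^esub> g"
    and t: "lw G t" "wdeg G t = g"
  shows "weq G S TYPE('f::comm_ring_1) (s @ z @ t) (t @ z @ s)"
proof -
  define \<tau> where "\<tau> x = (if x = (g,1::nat) then s else if x = (inv\<^bsub>G\<^esub> g,2) then z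
     else if x = (g,3) then t else [x])" for x
  define \<sigma> where "\<sigma> x = (fmono (\<tau> x) :: ('a,'f) fpoly)" for x
  have ge: "graded_endo G \<sigma>"
    unfolding graded_endo_def \<sigma>_def
  proof (intro ballI allI conjI)
    fix h i assume h: "h \<in> carrier G"
    have "lw G (\<tau> (h,i))" using s t z h by (simp add: \<tau>_def lw_def)
    then show "fmono (\<tau> (h, i)) \<in> free_alg G" by (rule fmono_free_alg)
    have "wdeg G (\<tau> (h,i)) = h" using s t z h by (simp add: \<tau>_def monoid.r_one[OF group.is_monoid[OF G] h])
    then show "homogeneous G h (fmono (\<tau> (h, i)) :: ('a,'f) fpoly)" by (simp add: homogeneous_fmono)
  qed
  have "fsubst \<sigma> (gen_g G g) \<in> TG_ideal_gen G S"
    by (rule TG_ideal_gen.endo[OF ge TG_ideal_gen.gen[OF cS]])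
  moreover have "fsubst \<sigma> (gen_g G g) = fsub (fmono (s @ z @ t)) (fmono (t @ z @ s))"
    unfolding gen_g_eq
    apply (subst fsubst_fsub_fmono)
    subgoal by simp
    apply (simp only: fword_subst.simps \<sigma>_def)
    apply (simp add: \<tau>_def)
    apply (simp add: fmono_mul)
    done
  ultimately show ?thesis unfolding weq_def by simp
qed


fun em :: "'a monoid \<Rightarrow> 'a \<Rightarrow> ('a \<times> nat) list \<Rightarrow> (('a \<times> nat) \<times> 'a) multiset" where
  "em G a [] = {#}"
| "em G a (x # xs) = add_mset (x, a) (em G (a \<otimes>\<^bsub>G\<^esub> fst x) xs)"

locale mgroup = group G for G :: "'a monoid" (structure)

context mgroup
begin

lemma wdeg_closed: "lw G w \<Longrightarrow> wdeg G w \<in> carrier G"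
  by (induction w) auto

lemma wdeg_append: "lw G u \<Longrightarrow> lw G v \<Longrightarrow> wdeg G (u @ v) = wdeg G u \<otimes> wdeg G v"
  by (induction u) (auto simp: m_assoc wdeg_closed)

lemma em_append: "a \<in> carrier G \<Longrightarrow> lw G u \<Longrightarrow> em G a (u @ v) = em G a u + em G (a \<otimes> wdeg G u) v"
proof (induction u arbitrary: a)
  case Nil then show ?case by simp
next
  case (Cons x u)
  then have "em G (a \<otimes> fst x) (u @ v) = em G (a \<otimes> fst x) u + em G ((a \<otimes> fst x) \<otimes> wdeg G u) v"
    by simp
  then show ?case using Cons.prems by (simp add: m_assoc wdeg_closed)
qed

lemma em_split: "a \<in> carrier G \<Longrightarrow> lw G w \<Longrightarrow> (x, v) \<in># em G a w \<Longrightarrow>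
   \<exists>C B. w = C @ x # B \<and> a \<otimes> wdeg G C = v"
proof (induction w arbitrary: a)
  case Nil then show ?case by simp
next
  case (Cons y w)
  show ?case
  proof (cases "(x, v) = (y, a)")
    case True
    then show ?thesis using Cons.prems by (intro exI[of _ "[]"] exI[of _ w]) auto
  next
    case False
    then have "(x, v) \<in># em G (a \<otimes> fst y) w" using Cons.prems by auto
    moreover have "a \<otimes> fst y \<in> carrier G" "lw G w" using Cons.prems by auto
    ultimately obtain C B where "w = C @ x # B" "(a \<otimes> fst y) \<otimes> wdeg G C = v"
      using Cons.IH by blast
    then show ?thesis using Cons.prems
      by (intro exI[of _ "y # C"] exI[of _ B]) (auto simp: m_assoc wdeg_closed)
  qed
qed

lemma em_vertex_closed: "a \<in> carrier G \<Longrightarrow> lw G w \<Longrightarrow> (x, v) \<in># em G a w \<Longrightarrow> v \<in> carrier G"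
  by (induction w arbitrary: a) auto

end

locale walk_eq = mgroup G for G :: "'a monoid" (structure) +
  fixes E :: "('a \<times> nat) list \<Rightarrow> ('a \<times> nat) list \<Rightarrow> bool"
  assumes E_refl: "E w w"
    and E_sym: "E w w' \<Longrightarrow> E w' w"
    and E_trans: "E u v \<Longrightarrow> E v w \<Longrightarrow> E u w"
    and E_ctx: "lw G u \<Longrightarrow> lw G v \<Longrightarrow> E w w' \<Longrightarrow> E (u @ w @ v) (u @ w' @ v)"
    and E_R1: "lw G s \<Longrightarrow> lw G t \<Longrightarrow> wdeg G s = \<one> \<Longrightarrow> wdeg G t = \<one> \<Longrightarrow> E (s @ t) (t @ s)"
    and E_R2: "g \<in> carrier G \<Longrightarrow> g \<noteq> \<one> \<Longrightarrow> lw G s \<Longrightarrow> lw G z \<Longrightarrow> lw G t \<Longrightarrow>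
       wdeg G s = g \<Longrightarrow> wdeg G z = inv g \<Longrightarrow> wdeg G t = g \<Longrightarrow> E (s @ z @ t) (t @ z @ s)"
begin

lemma E_R2': "lw G s \<Longrightarrow> lw G z \<Longrightarrow> lw G t \<Longrightarrow>
       wdeg G s = g \<Longrightarrow> wdeg G z = inv g \<Longrightarrow> wdeg G t = g \<Longrightarrow> E (s @ z @ t) (t @ z @ s)"
proof -
  assume s: "lw G s" and z: "lw G z" and t: "lw G t" and ds: "wdeg G s = g"
    and dz: "wdeg G z = inv g" and dt: "wdeg G t = g"
  have g: "g \<in> carrier G" using ds wdeg_closed[OF s] by simp
  show ?thesis
  proof (cases "g = \<one>")
    case False then show ?thesis using E_R2 g s z t ds dz dt by blast
  next
    case True
    then have d: "wdeg G s = \<one>" "wdeg G z = \<one>" "wdeg G t = \<one>" using ds dz dt by auto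
    have 1: "E (s @ z @ t) (z @ s @ t)"
      using E_ctx[OF _ t E_R1[OF s z d(1) d(2)], of "[]"] by simp
    have 2: "E (z @ s @ t) (z @ t @ s)"
      using E_ctx[OF z _ E_R1[OF s t d(1) d(3)], of "[]"] by simp
    have 3: "E (z @ t @ s) (t @ z @ s)"
      using E_ctx[OF _ s E_R1[OF z t d(2) d(3)], of "[]"] by simp
    show ?thesis using E_trans[OF E_trans[OF 1 2] 3] .
  qed
qed

lemma reach:
  assumes "\<And>l v. (l, v) \<in># em G a C \<Longrightarrow> v \<notin> W"
    and W: "\<And>v l. v \<in> W \<Longrightarrow> (l, v) \<in># em G c B \<Longrightarrow> v \<otimes> fst l \<in> W"
    and "v0 \<in> W" "v0 \<in> carrier G" "lw G P"
    and "set_mset (em G v0 P) \<subseteq> set_mset (em G a C) \<union> set_mset (em G c B)"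
  shows "v0 \<otimes> wdeg G P \<in> W"
  using assms(3-6)
proof (induction P arbitrary: v0)
  case Nil then show ?case by simp
next
  case (Cons l P)
  have "(l, v0) \<notin># em G a C" using assms(1) Cons.prems(1) by blast
  moreover have "(l, v0) \<in> set_mset (em G v0 (l # P))" by simp
  ultimately have "(l, v0) \<in># em G c B" using Cons.prems(4) by blast
  then have W1: "v0 \<otimes> fst l \<in> W" using W Cons.prems by blast
  have "v0 \<otimes> fst l \<otimes> wdeg G P \<in> W"
    using Cons.IH[OF W1] Cons.prems by auto
  then show ?case using Cons.prems by (simp add: m_assoc wdeg_closed)
qed

lemma front:
  assumes a: "a \<in> carrier G" and w': "lw G w'" and x: "fst x \<in> carrier G" and xs: "lw G xs"
    and eq: "em G a w' = em G a (x # xs)"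
  shows "\<exists>w''. lw G w'' \<and> E w' (x # w'') \<and> em G a (x # w'') = em G a w'"
proof -
  have "(x, a) \<in># em G a w'" using eq by simp
  then obtain C B where w'CB: "w' = C @ x # B" and aC: "a \<otimes> wdeg G C = a"
    using em_split[OF a w'] by blast
  have C: "lw G C" and B: "lw G B" using w' w'CB by auto
  have dC: "wdeg G C = \<one>" using aC a wdeg_closed[OF C] by simp
  define c where "c = a \<otimes> fst x"
  have c: "c \<in> carrier G" using a x c_def by simp
  have emw': "em G a w' = em G a C + add_mset (x, a) (em G c B)"
    using w'CB em_append[OF a C] aC c_def by simp
  have emc: "em G c xs = em G a C + em G c B"
    using eq emw' c_def by simp
  show ?thesis
  proof (cases "C = []")
    case True
    then show ?thesis using w'CB B E_refl by auto
  next
    case Cne: False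
    show ?thesis
    proof (cases "\<exists>B1 B2. B = B1 @ B2 \<and> c \<otimes> wdeg G B1 = a")
      case True
      then obtain B1 B2 where BB: "B = B1 @ B2" and cB1: "c \<otimes> wdeg G B1 = a" by blast
      have B1: "lw G B1" and B2: "lw G B2" using B BB by auto
      have dxB1: "wdeg G (x # B1) = \<one>"
        using cB1 c_def a x wdeg_closed[OF B1] by (simp add: m_assoc)
      have lxB1: "lw G (x # B1)" using x B1 by simp
      have "E ([] @ (C @ (x # B1)) @ B2) ([] @ ((x # B1) @ C) @ B2)"
        by (rule E_ctx[OF _ B2 E_R1[OF C lxB1 dC dxB1]]) simp
      then have "E w' (x # (B1 @ C @ B2))" using w'CB BB by simp
      moreover have "em G a (x # (B1 @ C @ B2)) = em G a w'"
      proof -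
        have "em G a ((x # B1) @ C @ B2) = em G a (x # B1) + em G a (C @ B2)"
          using em_append[OF a lxB1] dxB1 a by simp
        also have "\<dots> = em G a (x # B1) + em G a C + em G a B2"
          using em_append[OF a C] dC a by simp
        finally have 1: "em G a ((x # B1) @ C @ B2) = em G a (x # B1) + em G a C + em G a B2" .
        have "em G a (C @ (x # B1) @ B2) = em G a C + em G a ((x # B1) @ B2)"
          using em_append[OF a C] dC a by simp
        also have "\<dots> = em G a C + em G a (x # B1) + em G a B2"
          using em_append[OF a lxB1] dxB1 a by simp
        finally have 2: "em G a (C @ (x # B1) @ B2) = em G a C + em G a (x # B1) + em G a B2" .
        show ?thesis using 1 2 w'CB BB by (simp add: ac_simps)
      qed
      moreover have "lw G (B1 @ C @ B2)" using B1 C B2 by simp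
      ultimately show ?thesis by blast
    next
      case noret: False
      obtain y C' where yC: "C = y # C'" using Cne by (cases C) auto
      have "(y, a) \<in># em G c xs" using emc yC by simp
      then obtain P1 Q where xsPQ: "xs = P1 @ y # Q" and cP1: "c \<otimes> wdeg G P1 = a"
        using em_split[OF c xs] by blast
      have P1: "lw G P1" using xs xsPQ by simp
      define W where "W = {c \<otimes> wdeg G B1 | B1 B2. B = B1 @ B2}"
      have "\<exists>l v. (l, v) \<in># em G a C \<and> v \<in> W"
      proof (rule ccontr)
        assume nc: "\<not> ?thesis"
        have Wstep: "v \<otimes> fst l \<in> W" if vW: "v \<in> W" and lvB: "(l, v) \<in># em G c B" for v l
        proof -
          obtain B1 B2 where "B = B1 @ l # B2" "c \<otimes> wdeg G B1 = v"
            using em_split[OF c B lvB] by blast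
          moreover have "lw G B1" "fst l \<in> carrier G" using B calculation(1) by auto
          ultimately show ?thesis unfolding W_def
            by (intro CollectI exI[of _ "B1 @ [l]"] exI[of _ B2])
               (auto simp: wdeg_append wdeg_closed m_assoc c)
        qed
        have cW: "c \<in> W" unfolding W_def using c by (intro CollectI exI[of _ "[]"] exI[of _ B]) simp
        have "set_mset (em G c P1) \<subseteq> set_mset (em G a C) \<union> set_mset (em G c B)"
        proof -
          have e: "em G c xs = em G c P1 + em G (c \<otimes> wdeg G P1) (y # Q)"
            using em_append[OF c P1] xsPQ by simp
          have "em G c P1 \<subseteq># em G c xs" unfolding e by (rule mset_subset_eq_add_left)
          then have "set_mset (em G c P1) \<subseteq> set_mset (em G c xs)" by (rule set_mset_mono)
          also have "\<dots> = set_mset (em G a C) \<union> set_mset (em G c B)" using emc by simp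
          finally show ?thesis .
        qed
        moreover have "\<And>l v. (l, v) \<in># em G a C \<Longrightarrow> v \<notin> W" using nc by blast
        ultimately have "c \<otimes> wdeg G P1 \<in> W"
          using reach[of a C W c B c P1] Wstep cW c P1 by blast
        then have "a \<in> W" using cP1 by simp
        then obtain B1 B2 where "B = B1 @ B2" "a = c \<otimes> wdeg G B1" unfolding W_def by blast
        then show False using noret by (metis (no_types))
      qed
      then obtain l v where lv: "(l, v) \<in># em G a C" and vW: "v \<in> W" by blast
      obtain B1 B2 where BB: "B = B1 @ B2" and cB1: "c \<otimes> wdeg G B1 = v"
        using vW unfolding W_def by blast
      obtain C1 C2' where CC: "C = C1 @ l # C2'" and aC1: "a \<otimes> wdeg G C1 = v"
        using em_split[OF a C lv] by blast
      define C2 where "C2 = l # C2'"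
      define g where "g = wdeg G C1"
      have C1: "lw G C1" and C2: "lw G C2" using C CC C2_def by auto
      have B1: "lw G B1" and B2: "lw G B2" using B BB by auto
      have g: "g \<in> carrier G" using g_def wdeg_closed[OF C1] by simp
      have "g \<otimes> wdeg G C2 = \<one>" using dC CC C2_def wdeg_append[OF C1 C2] g_def by simp
      then have dC2: "wdeg G C2 = inv g" using g wdeg_closed[OF C2]
        by (metis inv_equality inv_comm)
      have lxB1: "lw G (x # B1)" using x B1 by simp
      have "a \<otimes> (fst x \<otimes> wdeg G B1) = a \<otimes> g"
        using cB1 aC1 c_def a x wdeg_closed[OF B1] g_def by (simp add: m_assoc)
      then have dxB1: "wdeg G (x # B1) = g" using a x g wdeg_closed[OF B1] by simp
      have "E ([] @ (C1 @ C2 @ (x # B1)) @ B2) ([] @ ((x # B1) @ C2 @ C1) @ B2)"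
        by (rule E_ctx[OF _ B2 E_R2'[OF C1 C2 lxB1 g_def[symmetric] dC2 dxB1]]) simp
      then have "E w' (x # (B1 @ C2 @ C1 @ B2))" using w'CB BB CC C2_def by simp
      moreover have "em G a (x # (B1 @ C2 @ C1 @ B2)) = em G a w'"
      proof -
        have v: "v \<in> carrier G" using aC1 a g g_def by auto
        have av: "a \<otimes> g = v" using aC1 g_def by simp
        have va: "v \<otimes> inv g = a" using av[symmetric] a g by (simp add: m_assoc)
        have "em G a ((x # B1) @ C2 @ C1 @ B2) = em G a (x # B1) + em G v (C2 @ C1 @ B2)"
          using em_append[OF a lxB1] dxB1 av by simp
        also have "em G v (C2 @ C1 @ B2) = em G v C2 + em G a (C1 @ B2)"
          using em_append[OF v C2] dC2 va by simp
        also have "em G a (C1 @ B2) = em G a C1 + em G v B2"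
          using em_append[OF a C1] av g_def by simp
        finally have 1: "em G a ((x # B1) @ C2 @ C1 @ B2) =
            em G a (x # B1) + (em G v C2 + (em G a C1 + em G v B2))" .
        have "em G a (C1 @ C2 @ (x # B1) @ B2) = em G a C1 + em G v (C2 @ (x # B1) @ B2)"
          using em_append[OF a C1] av g_def by simp
        also have "em G v (C2 @ (x # B1) @ B2) = em G v C2 + em G a ((x # B1) @ B2)"
          using em_append[OF v C2] dC2 va by simp
        also have "em G a ((x # B1) @ B2) = em G a (x # B1) + em G v B2"
          using em_append[OF a lxB1] dxB1 av by simp
        finally have 2: "em G a (C1 @ C2 @ (x # B1) @ B2) =
            em G a C1 + (em G v C2 + (em G a (x # B1) + em G v B2))" .
        have w'eq: "w' = C1 @ C2 @ (x # B1) @ B2" using w'CB BB CC C2_def by simp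
        show ?thesis using 1 2 w'eq by (simp add: ac_simps)
      qed
      moreover have "lw G (B1 @ C2 @ C1 @ B2)" using B1 C2 C1 B2 by simp
      ultimately show ?thesis by blast
    qed
  qed
qed

theorem em_eq_E:
  "a \<in> carrier G \<Longrightarrow> lw G w \<Longrightarrow> lw G w' \<Longrightarrow> em G a w = em G a w' \<Longrightarrow> E w w'"
proof (induction w arbitrary: a w')
  case Nil
  then have "w' = []" by (cases w') auto
  then show ?case using E_refl by simp
next
  case (Cons x xs)
  have x: "fst x \<in> carrier G" and xs: "lw G xs" using Cons.prems by auto
  obtain w'' where w'': "lw G w''" "E w' (x # w'')" "em G a (x # w'') = em G a w'"
    using front[OF Cons.prems(1,3) x xs] Cons.prems(4) by metis
  have "add_mset (x, a) (em G (a \<otimes> fst x) xs) = add_mset (x, a) (em G (a \<otimes> fst x) w'')"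
    using w''(3) Cons.prems(4) by simp
  then have "em G (a \<otimes> fst x) xs = em G (a \<otimes> fst x) w''" by simp
  then have "E xs w''" using Cons.IH[OF _ xs w''(1)] m_closed[OF Cons.prems(1) x] by blast
  then have "E ([x] @ xs @ []) ([x] @ w'' @ [])" using E_ctx[of "[x]" "[]"] x by simp
  then have "E (x # xs) (x # w'')" by simp
  then show ?case by (rule E_trans[OF _ E_sym[OF w''(2)]])
qed

end


lemma msmult_entry[simp]: "msmult c A $ i $ j = c * A $ i $ j" by (simp add: msmult_def)

lemma meval_superset:
  assumes "finite S" "fsupp p \<subseteq> S"
  shows "meval \<phi> p = (\<Sum>w\<in>S. msmult (p w) (mword \<phi> w))"
  unfolding meval_def
  by (rule sum.mono_neutral_left[OF assms(1) assms(2)]) (auto simp: fsupp_def vec_eq_iff)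

lemma meval_entry:
  assumes "finite S" "fsupp p \<subseteq> S"
  shows "meval \<phi> p $ i $ j = (\<Sum>w\<in>S. p w * mword \<phi> w $ i $ j)"
  by (simp add: meval_superset[OF assms])

lemma meval_fadd:
  fixes p q :: "('a,'f::comm_ring_1) fpoly"
  assumes "finite (fsupp p)" "finite (fsupp q)"
  shows "meval \<phi> (fadd p q) = meval \<phi> p + meval \<phi> q"
proof -
  let ?S = "fsupp p \<union> fsupp q"
  have f: "finite ?S" using assms by simp
  have s: "fsupp (fadd p q) \<subseteq> ?S" by (auto simp: fsupp_def fadd_def)
  show ?thesis
  proof (simp only: vec_eq_iff, intro allI)
    fix i j
    have e: "meval \<phi> (fadd p q) $ i $ j = (\<Sum>w\<in>?S. fadd p q w * mword \<phi> w $ i $ j)"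
      by (rule meval_entry[OF f s])
    show "meval \<phi> (fadd p q) $ i $ j = (meval \<phi> p + meval \<phi> q) $ i $ j"
      unfolding e by (simp add: meval_entry[OF f, of p] meval_entry[OF f, of q]
        fadd_def distrib_right sum.distrib)
  qed
qed

lemma meval_fsmult:
  fixes p :: "('a,'f::comm_ring_1) fpoly"
  assumes "finite (fsupp p)"
  shows "meval \<phi> (fsmult c p) = msmult c (meval \<phi> p)"
proof -
  have s: "fsupp (fsmult c p) \<subseteq> fsupp p" by (auto simp: fsupp_def fsmult_def)
  show ?thesis
  proof (simp only: vec_eq_iff, intro allI)
    fix i j
    have e: "meval \<phi> (fsmult c p) $ i $ j = (\<Sum>w\<in>fsupp p. fsmult c p w * mword \<phi> w $ i $ j)"
      by (rule meval_entry[OF assms s])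
    show "meval \<phi> (fsmult c p) $ i $ j = msmult c (meval \<phi> p) $ i $ j"
      unfolding e by (simp add: meval_entry[OF assms, of p] fsmult_def sum_distrib_left mult.assoc)
  qed
qed

lemma meval_fsub:
  fixes p q :: "('a,'f::comm_ring_1) fpoly"
  assumes "finite (fsupp p)" "finite (fsupp q)"
  shows "meval \<phi> (fsub p q) = meval \<phi> p - meval \<phi> q"
proof -
  let ?S = "fsupp p \<union> fsupp q"
  have f: "finite ?S" using assms by simp
  have s: "fsupp (fsub p q) \<subseteq> ?S" by (auto simp: fsupp_def fsub_def)
  show ?thesis
  proof (simp only: vec_eq_iff, intro allI)
    fix i j
    have e: "meval \<phi> (fsub p q) $ i $ j = (\<Sum>w\<in>?S. fsub p q w * mword \<phi> w $ i $ j)"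
      by (rule meval_entry[OF f s])
    show "meval \<phi> (fsub p q) $ i $ j = (meval \<phi> p - meval \<phi> q) $ i $ j"
      unfolding e by (simp add: meval_entry[OF f, of p] meval_entry[OF f, of q]
        fsub_def left_diff_distrib sum_subtractf)
  qed
qed

lemma meval_zero: "meval \<phi> (\<lambda>_. 0) = 0"
  by (simp add: meval_def fsupp_def)

lemma meval_fmono: "meval \<phi> (fmono w :: ('a,'f::comm_ring_1) fpoly) = mword \<phi> w"
  unfolding meval_def fsupp_fmono by (simp add: fmono_def vec_eq_iff)

lemma mword_append: "mword \<phi> (u @ v) = mword \<phi> u ** mword \<phi> v"
  by (induction u) (auto simp: matrix_mul_assoc)

lemma fsupp_fmul: "fsupp (fmul p q) \<subseteq> (\<lambda>(u, v). u @ v) ` (fsupp p \<times> fsupp q)"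
proof
  fix w assume "w \<in> fsupp (fmul p q)"
  then have "(\<Sum>k\<le>length w. p (take k w) * q (drop k w)) \<noteq> 0"
    by (simp add: fsupp_def fmul_def)
  then obtain k where "p (take k w) * q (drop k w) \<noteq> 0"
    using sum.not_neutral_contains_not_neutral by blast
  then have "take k w \<in> fsupp p" "drop k w \<in> fsupp q" by (auto simp: fsupp_def)
  then show "w \<in> (\<lambda>(u, v). u @ v) ` (fsupp p \<times> fsupp q)"
    by (intro image_eqI[of _ _ "(take k w, drop k w)"]) auto
qed

lemma finite_fmul: "finite (fsupp p) \<Longrightarrow> finite (fsupp q) \<Longrightarrow> finite (fsupp (fmul p q))"
  by (rule finite_subset[OF fsupp_fmul]) simp

lemma finite_fsmult: "finite (fsupp p) \<Longrightarrow> finite (fsupp (fsmult c p :: ('a,'f::comm_ring_1) fpoly))"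
  by (rule finite_subset[of _ "fsupp p"]) (auto simp: fsupp_def fsmult_def)

lemma matrix_mul_sum_right:
  fixes A :: "'f::comm_ring_1^'n::finite^'n"
  shows "A ** (\<Sum>v\<in>S. msmult (c v) (B v)) = (\<Sum>v\<in>S. msmult (c v) (A ** B v))"
proof -
  have "(A ** (\<Sum>v\<in>S. msmult (c v) (B v))) $ i $ j = (\<Sum>v\<in>S. msmult (c v) (A ** B v)) $ i $ j" for i j
  proof -
    have "(A ** (\<Sum>v\<in>S. msmult (c v) (B v))) $ i $ j = (\<Sum>k\<in>UNIV. \<Sum>v\<in>S. c v * (A$i$k * B v $k$j))"
      by (simp add: matrix_matrix_mult_def sum_distrib_left mult_ac)
    also have "\<dots> = (\<Sum>v\<in>S. \<Sum>k\<in>UNIV. c v * (A$i$k * B v $k$j))" by (rule sum.swap)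
    also have "\<dots> = (\<Sum>v\<in>S. msmult (c v) (A ** B v)) $ i $ j"
      by (simp add: matrix_matrix_mult_def sum_distrib_left)
    finally show ?thesis .
  qed
  then show ?thesis by (simp add: vec_eq_iff)
qed

lemma matrix_mul_sum_left:
  fixes A :: "'f::comm_ring_1^'n::finite^'n"
  shows "(\<Sum>v\<in>S. msmult (c v) (B v)) ** A = (\<Sum>v\<in>S. msmult (c v) (B v ** A))"
proof -
  have "((\<Sum>v\<in>S. msmult (c v) (B v)) ** A) $ i $ j = (\<Sum>v\<in>S. msmult (c v) (B v ** A)) $ i $ j" for i j
  proof -
    have "((\<Sum>v\<in>S. msmult (c v) (B v)) ** A) $ i $ j = (\<Sum>k\<in>UNIV. \<Sum>v\<in>S. c v * (B v $i$k * A$k$j))"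
      by (simp add: matrix_matrix_mult_def sum_distrib_right mult.assoc)
    also have "\<dots> = (\<Sum>v\<in>S. \<Sum>k\<in>UNIV. c v * (B v $i$k * A$k$j))" by (rule sum.swap)
    also have "\<dots> = (\<Sum>v\<in>S. msmult (c v) (B v ** A)) $ i $ j"
      by (simp add: matrix_matrix_mult_def sum_distrib_left)
    finally show ?thesis .
  qed
  then show ?thesis by (simp add: vec_eq_iff)
qed

lemma meval_fmul_fmono:
  fixes \<phi> :: "('a \<times> nat) \<Rightarrow> 'f::comm_ring_1^'n::finite^'n"
  assumes q: "finite (fsupp q)"
  shows "meval \<phi> (fmul (fmono u) q) = mword \<phi> u ** meval \<phi> q"
proof -
  have s: "fsupp (fmul (fmono u) q) \<subseteq> (\<lambda>v. u @ v) ` fsupp q"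
  proof
    fix w assume "w \<in> fsupp (fmul (fmono u) q)"
    then have "take (length u) w = u" "drop (length u) w \<in> fsupp q"
      by (auto simp: fsupp_def fmul_fmono_left split: if_splits)
    then show "w \<in> (\<lambda>v. u @ v) ` fsupp q"
      by (intro image_eqI[of _ _ "drop (length u) w"]) (metis append_take_drop_id)
  qed
  have "meval \<phi> (fmul (fmono u) q) = (\<Sum>w\<in>(\<lambda>v. u @ v) ` fsupp q. msmult (fmul (fmono u) q w) (mword \<phi> w))"
    by (rule meval_superset[OF _ s]) (simp add: q)
  also have "\<dots> = (\<Sum>v\<in>fsupp q. msmult (q v) (mword \<phi> u ** mword \<phi> v))"
    by (subst sum.reindex) (auto simp: inj_on_def fmul_fmono_left mword_append)
  also have "\<dots> = mword \<phi> u ** meval \<phi> q"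
    by (simp add: matrix_mul_sum_right meval_def)
  finally show ?thesis .
qed

lemma fun_sum_insert:
  "i \<notin> I \<Longrightarrow> finite I \<Longrightarrow> (\<lambda>w. \<Sum>j\<in>insert i I. f j w) = fadd (f i) (\<lambda>w. \<Sum>j\<in>I. f j w)"
  by (simp add: fadd_def)

lemma fsupp_fun_sum: "fsupp (\<lambda>w. \<Sum>i\<in>I. f i w) \<subseteq> (\<Union>i\<in>I. fsupp (f i))"
proof
  fix w assume "w \<in> fsupp (\<lambda>w. \<Sum>i\<in>I. f i w)"
  then have "(\<Sum>i\<in>I. f i w) \<noteq> 0" by (simp add: fsupp_def)
  then obtain i where "i \<in> I" "f i w \<noteq> 0" using sum.not_neutral_contains_not_neutral by blast
  then show "w \<in> (\<Union>i\<in>I. fsupp (f i))" by (auto simp: fsupp_def)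
qed

lemma finite_fun_sum: "finite I \<Longrightarrow> (\<And>i. i \<in> I \<Longrightarrow> finite (fsupp (f i))) \<Longrightarrow> finite (fsupp (\<lambda>w. \<Sum>i\<in>I. f i w))"
  by (rule finite_subset[OF fsupp_fun_sum]) auto

lemma meval_fun_sum:
  fixes \<phi> :: "('a \<times> nat) \<Rightarrow> 'f::comm_ring_1^'n::finite^'n"
  assumes "finite I" "\<And>i. i \<in> I \<Longrightarrow> finite (fsupp (f i))"
  shows "meval \<phi> (\<lambda>w. \<Sum>i\<in>I. f i w) = (\<Sum>i\<in>I. meval \<phi> (f i))"
  using assms
proof (induction I rule: finite_induct)
  case empty then show ?case using meval_zero by simp
next
  case (insert i I)
  show ?case
    unfolding fun_sum_insert[OF insert(2) insert(1)]
    by (simp add: meval_fadd finite_fun_sum insert)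
qed

lemma fmul_decomp:
  fixes p :: "('a,'f::comm_ring_1) fpoly"
  assumes p: "finite (fsupp p)"
  shows "fmul p q = (\<lambda>w. \<Sum>u\<in>fsupp p. fsmult (p u) (fmul (fmono u) q) w)"
proof
  fix w :: "('a \<times> nat) list"
  define Pre where "Pre = (\<lambda>k. take k w) ` {..length w}"
  define f where "f u = p u * q (drop (length u) w)" for u
  have fin: "finite Pre" by (simp add: Pre_def)
  have inj: "inj_on (\<lambda>k. take k w) {..length w}"
  proof (rule inj_onI)
    fix k k' assume "k \<in> {..length w}" "k' \<in> {..length w}" "take k w = take k' w"
    then have "length (take k w) = length (take k' w)" "k \<le> length w" "k' \<le> length w" by auto
    then show "k = k'" by (auto simp: min_def split: if_splits)
  qed
  have "fmul p q w = (\<Sum>k\<le>length w. f (take k w))"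
    by (auto simp: fmul_def f_def intro!: sum.cong)
  also have "\<dots> = (\<Sum>u\<in>Pre. f u)"
    unfolding Pre_def by (rule sum.reindex[OF inj, symmetric, unfolded comp_def])
  also have "\<dots> = (\<Sum>u\<in>Pre \<inter> fsupp p. f u)"
    by (rule sum.mono_neutral_right[OF fin]) (auto simp: f_def fsupp_def)
  also have "\<dots> = (\<Sum>u\<in>fsupp p. if u \<in> Pre then f u else 0)"
    by (subst Int_commute) (rule sum.inter_restrict[OF p])
  also have "\<dots> = (\<Sum>u\<in>fsupp p. fsmult (p u) (fmul (fmono u) q) w)"
  proof (rule sum.cong[OF refl])
    fix u
    have "(u \<in> Pre) = (take (length u) w = u)"
    proof
      assume "u \<in> Pre"
      then obtain k where "k \<le> length w" "u = take k w" unfolding Pre_def by auto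
      then show "take (length u) w = u" by (simp add: min_def)
    next
      assume a: "take (length u) w = u"
      then have "length u \<le> length w" by (metis length_take min.cobounded1)
      then show "u \<in> Pre" unfolding Pre_def using a by (intro image_eqI[of _ _ "length u"]) auto
    qed
    then show "(if u \<in> Pre then f u else 0) = fsmult (p u) (fmul (fmono u) q) w"
      by (simp add: fsmult_def fmul_fmono_left f_def)
  qed
  finally show "fmul p q w = (\<Sum>u\<in>fsupp p. fsmult (p u) (fmul (fmono u) q) w)" .
qed

lemma meval_fmul:
  fixes \<phi> :: "('a \<times> nat) \<Rightarrow> 'f::comm_ring_1^'n::finite^'n"
  assumes p: "finite (fsupp p)" and q: "finite (fsupp q)"
  shows "meval \<phi> (fmul p q) = meval \<phi> p ** meval \<phi> q"
proof -
  have fi: "\<And>u. finite (fsupp (fsmult (p u) (fmul (fmono u) q)))"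
    by (intro finite_fsmult finite_fmul) (simp_all add: q)
  have "meval \<phi> (fmul p q) = (\<Sum>u\<in>fsupp p. meval \<phi> (fsmult (p u) (fmul (fmono u) q)))"
    unfolding fmul_decomp[OF p] by (rule meval_fun_sum[OF p fi])
  also have "\<dots> = (\<Sum>u\<in>fsupp p. msmult (p u) (mword \<phi> u ** meval \<phi> q))"
    by (simp add: meval_fsmult finite_fmul q meval_fmul_fmono)
  also have "\<dots> = meval \<phi> p ** meval \<phi> q"
    by (simp add: matrix_mul_sum_left meval_def)
  finally show ?thesis .
qed


lemma fs_fword_subst: "(\<And>x. x \<in> set w \<Longrightarrow> finite (fsupp (\<sigma> x))) \<Longrightarrow>
    finite (fsupp (fword_subst \<sigma> w :: ('a,'f::comm_ring_1) fpoly))"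
  by (induction w) (auto intro: finite_fmul)

lemma meval_fword_subst:
  fixes \<phi> :: "('a \<times> nat) \<Rightarrow> 'f::comm_ring_1^'n::finite^'n"
  shows "(\<And>x. x \<in> set w \<Longrightarrow> finite (fsupp (\<sigma> x))) \<Longrightarrow>
    meval \<phi> (fword_subst \<sigma> w) = mword (\<lambda>x. meval \<phi> (\<sigma> x)) w"
proof (induction w)
  case Nil then show ?case by (simp add: meval_fmono)
next
  case (Cons x w)
  then show ?case by (simp add: meval_fmul fs_fword_subst)
qed

lemma fsubst_fun_sum: "fsubst \<sigma> p = (\<lambda>u. \<Sum>w\<in>fsupp p. fsmult (p w) (fword_subst \<sigma> w) u)"
  by (simp add: fsubst_def fsmult_def)

lemma meval_fsubst:
  fixes \<phi> :: "('a \<times> nat) \<Rightarrow> 'f::comm_ring_1^'n::finite^'n"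
  assumes p: "finite (fsupp p)" and \<sigma>: "\<And>w x. w \<in> fsupp p \<Longrightarrow> x \<in> set w \<Longrightarrow> finite (fsupp (\<sigma> x))"
  shows "meval \<phi> (fsubst \<sigma> p) = meval (\<lambda>x. meval \<phi> (\<sigma> x)) p"
proof -
  have fi: "\<And>w. w \<in> fsupp p \<Longrightarrow> finite (fsupp (fsmult (p w) (fword_subst \<sigma> w)))"
    by (intro finite_fsmult fs_fword_subst) (rule \<sigma>)
  have "meval \<phi> (fsubst \<sigma> p) = (\<Sum>w\<in>fsupp p. meval \<phi> (fsmult (p w) (fword_subst \<sigma> w)))"
    unfolding fsubst_fun_sum by (rule meval_fun_sum[OF p fi])
  also have "\<dots> = (\<Sum>w\<in>fsupp p. msmult (p w) (mword (\<lambda>x. meval \<phi> (\<sigma> x)) w))"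
    by (rule sum.cong[OF refl]) (simp add: meval_fsmult fs_fword_subst \<sigma> meval_fword_subst)
  also have "\<dots> = meval (\<lambda>x. meval \<phi> (\<sigma> x)) p" by (simp add: meval_def)
  finally show ?thesis .
qed

lemma free_alg_iff: "p \<in> free_alg G \<longleftrightarrow> finite (fsupp p) \<and> (\<forall>w\<in>fsupp p. lw G w)"
  by (auto simp: free_alg_def lw_def)

lemma fa_fmul: "p \<in> free_alg G \<Longrightarrow> q \<in> free_alg G \<Longrightarrow> fmul p q \<in> free_alg G"
  unfolding free_alg_iff using fsupp_fmul[of p q] by (auto intro: finite_fmul)

lemma fsupp_fadd: "fsupp (fadd p q :: ('a,'f::comm_ring_1) fpoly) \<subseteq> fsupp p \<union> fsupp q"
proof
  fix w assume "w \<in> fsupp (fadd p q)"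
  then have "p w + q w \<noteq> 0" by (simp add: fsupp_def fadd_def)
  then have "p w \<noteq> 0 \<or> q w \<noteq> 0" by (cases "p w = 0") auto
  then show "w \<in> fsupp p \<union> fsupp q" by (simp add: fsupp_def)
qed

lemma fsupp_fsmult: "fsupp (fsmult c p :: ('a,'f::comm_ring_1) fpoly) \<subseteq> fsupp p"
  by (auto simp: fsupp_def fsmult_def)

lemma fa_fadd: "p \<in> free_alg G \<Longrightarrow> q \<in> free_alg G \<Longrightarrow> fadd p (q :: ('a,'f::comm_ring_1) fpoly) \<in> free_alg G"
  unfolding free_alg_iff using fsupp_fadd[of p q]
  by (meson UnE finite_UnI rev_finite_subset subsetD)

lemma fa_fsmult: "p \<in> free_alg G \<Longrightarrow> fsmult c (p :: ('a,'f::comm_ring_1) fpoly) \<in> free_alg G"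
  unfolding free_alg_iff using fsupp_fsmult[of c p]
  by (meson rev_finite_subset subsetD)

lemma fa_zero: "(\<lambda>_. 0) \<in> free_alg G"
  by (simp add: free_alg_iff fsupp_def)

lemma fa_fword_subst: "(\<And>x. x \<in> set w \<Longrightarrow> \<sigma> x \<in> free_alg G) \<Longrightarrow>
    (fword_subst \<sigma> w :: ('a,'f::comm_ring_1) fpoly) \<in> free_alg G"
  by (induction w) (auto intro: fa_fmul fmono_free_alg)

lemma fa_fsubst:
  assumes p: "p \<in> free_alg G" and \<sigma>: "\<And>x. fst x \<in> carrier G \<Longrightarrow> \<sigma> x \<in> free_alg G"
  shows "fsubst \<sigma> (p :: ('a,'f::comm_ring_1) fpoly) \<in> free_alg G"
proof -
  have ws: "fword_subst \<sigma> w \<in> free_alg G" if w: "w \<in> fsupp p" for w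
  proof (rule fa_fword_subst)
    fix x assume "x \<in> set w"
    then have "fst x \<in> carrier G" using p w by (auto simp: free_alg_iff lw_def)
    then show "\<sigma> x \<in> free_alg G" by (rule \<sigma>)
  qed
  have "fsupp (fsubst \<sigma> p) \<subseteq> (\<Union>w\<in>fsupp p. fsupp (fsmult (p w) (fword_subst \<sigma> w)))"
    unfolding fsubst_fun_sum by (rule fsupp_fun_sum)
  also have "\<dots> \<subseteq> (\<Union>w\<in>fsupp p. fsupp (fword_subst \<sigma> w))"
    by (auto simp: fsupp_def fsmult_def)
  finally have s: "fsupp (fsubst \<sigma> p) \<subseteq> (\<Union>w\<in>fsupp p. fsupp (fword_subst \<sigma> w))" .
  have f: "finite (\<Union>w\<in>fsupp p. fsupp (fword_subst \<sigma> w))"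
    using p ws by (auto simp: free_alg_iff)
  show ?thesis unfolding free_alg_iff
    using finite_subset[OF s f] s ws by (auto simp: free_alg_iff)
qed

context mgroup
begin

lemma inv_cancel_l[simp]: "x \<in> carrier G \<Longrightarrow> y \<in> carrier G \<Longrightarrow> x \<otimes> (inv x \<otimes> y) = y"
  by (simp add: m_assoc[symmetric])

lemma inv_cancel_l'[simp]: "x \<in> carrier G \<Longrightarrow> y \<in> carrier G \<Longrightarrow> inv x \<otimes> (x \<otimes> y) = y"
  by (simp add: m_assoc[symmetric])

lemma EC_zero: "0 \<in> elem_comp G gs h"
  by (simp add: elem_comp_def)

lemma EC_add:
  fixes A B :: "'f::comm_ring_1^'n::finite^'n"
  shows "A \<in> elem_comp G gs h \<Longrightarrow> B \<in> elem_comp G gs h \<Longrightarrow> A + B \<in> elem_comp G gs h"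
  unfolding elem_comp_def
proof (intro CollectI allI impI)
  fix i j assume "A \<in> {A. \<forall>i j. A $ i $ j \<noteq> 0 \<longrightarrow> inv gs i \<otimes> gs j = h}"
    "B \<in> {A. \<forall>i j. A $ i $ j \<noteq> 0 \<longrightarrow> inv gs i \<otimes> gs j = h}" "(A + B) $ i $ j \<noteq> 0"
  then show "inv gs i \<otimes> gs j = h" by (cases "A $ i $ j = 0") auto
qed

lemma EC_msmult: "A \<in> elem_comp G gs h \<Longrightarrow> msmult c (A :: 'f::comm_ring_1^'n::finite^'n) \<in> elem_comp G gs h"
  unfolding elem_comp_def
proof (intro CollectI allI impI)
  fix i j assume "A \<in> {A. \<forall>i j. A $ i $ j \<noteq> 0 \<longrightarrow> inv gs i \<otimes> gs j = h}" "msmult c A $ i $ j \<noteq> 0"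
  then show "inv gs i \<otimes> gs j = h" by (cases "A $ i $ j = 0") auto
qed

lemma EC_sum:
  fixes f :: "'c \<Rightarrow> 'f::comm_ring_1^'n::finite^'n"
  shows "finite S \<Longrightarrow> (\<And>x. x \<in> S \<Longrightarrow> f x \<in> elem_comp G gs h) \<Longrightarrow> (\<Sum>x\<in>S. f x) \<in> elem_comp G gs h"
  by (induction S rule: finite_induct) (auto intro: EC_zero EC_add)

lemma EC_mul:
  fixes A B :: "'f::comm_ring_1^'n::finite^'n"
  assumes gs: "\<And>i. gs i \<in> carrier G" and A: "A \<in> elem_comp G gs g" and B: "B \<in> elem_comp G gs h"
  shows "A ** B \<in> elem_comp G gs (g \<otimes> h :: 'a)"
  unfolding elem_comp_def
proof (intro CollectI allI impI)
  fix i j assume "(A ** B) $ i $ j \<noteq> 0"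
  then have "(\<Sum>k\<in>UNIV. A $ i $ k * B $ k $ j) \<noteq> 0" by (simp add: matrix_matrix_mult_def)
  then obtain k where "A $ i $ k * B $ k $ j \<noteq> 0" using sum.not_neutral_contains_not_neutral by blast
  then have "A $ i $ k \<noteq> 0" "B $ k $ j \<noteq> 0" by auto
  then have "inv (gs i) \<otimes> gs k = g" "inv (gs k) \<otimes> gs j = h"
    using A B by (auto simp: elem_comp_def)
  then show "inv (gs i) \<otimes> gs j = g \<otimes> h" using gs by (auto simp: m_assoc)
qed

lemma EC_one: "(\<And>i. gs i \<in> carrier G) \<Longrightarrow> (mat 1 :: 'f::comm_ring_1^'n::finite^'n) \<in> elem_comp G gs \<one>"
  by (auto simp: elem_comp_def mat_def)

lemma mword_EC:
  fixes \<phi> :: "('a \<times> nat) \<Rightarrow> 'f::comm_ring_1^'n::finite^'n"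
  assumes gs: "\<And>i. gs i \<in> carrier G" and \<phi>: "graded_assign G gs \<phi>"
  shows "lw G w \<Longrightarrow> mword \<phi> w \<in> elem_comp G gs (wdeg G w)"
proof (induction w)
  case Nil then show ?case using EC_one[OF gs] by simp
next
  case (Cons x w)
  have "\<phi> x \<in> elem_comp G gs (fst x)"
    using \<phi> Cons.prems unfolding graded_assign_def by (cases x) auto
  then show ?case using Cons EC_mul[OF gs] by simp
qed

lemma meval_EC:
  fixes \<phi> :: "('a \<times> nat) \<Rightarrow> 'f::comm_ring_1^'n::finite^'n"
  assumes gs: "\<And>i. gs i \<in> carrier G" and \<phi>: "graded_assign G gs \<phi>"
    and p: "p \<in> free_alg G" and h: "homogeneous G g p"
  shows "meval \<phi> p \<in> elem_comp G gs g"
  unfolding meval_def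
proof (rule EC_sum)
  show "finite (fsupp p)" using p by (simp add: free_alg_iff)
  fix w assume w: "w \<in> fsupp p"
  then have "lw G w" "wdeg G w = g" using p h by (auto simp: free_alg_iff homogeneous_def)
  then show "msmult (p w) (mword \<phi> w) \<in> elem_comp G gs g"
    using mword_EC[OF gs \<phi>] EC_msmult by metis
qed

end


lemma poly_zero_infinite:
  fixes Q :: "'f::field poly"
  assumes inf: "infinite (UNIV :: 'f set)" and z: "\<And>y. poly Q y = 0"
  shows "Q = 0"
proof (rule ccontr)
  assume "Q \<noteq> 0"
  then have "finite {x. poly Q x = 0}" by (rule poly_roots_finite)
  moreover have "{x. poly Q x = 0} = UNIV" using z by auto
  ultimately show False using inf by simp
qed

lemma prod_mset_split:
  fixes t :: "'x \<Rightarrow> 'f::comm_ring_1"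
  shows "prod_mset (image_mset t m) =
    t x ^ count m x * prod_mset (image_mset t (filter_mset (\<lambda>y. y \<noteq> x) m))"
proof -
  have m: "m = filter_mset (\<lambda>y. y \<noteq> x) m + replicate_mset (count m x) x"
    by (rule multiset_eqI) (auto simp: count_filter_mset)
  have "prod_mset (image_mset t m) = prod_mset (image_mset t (filter_mset (\<lambda>y. y \<noteq> x) m)) *
      prod_mset (image_mset t (replicate_mset (count m x) x))"
    by (subst m) (simp del: filter_mset_eq_conv)
  then show ?thesis by (simp add: mult.commute)
qed

lemma prod_mset_upd_notin:
  "x \<notin># m \<Longrightarrow> prod_mset (image_mset (t(x := y)) m) = prod_mset (image_mset t m)"
proof -
  assume "x \<notin># m"
  then have "image_mset (t(x := y)) m = image_mset t m"
    by (intro image_mset_cong) auto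
  then show ?thesis by simp
qed

lemma mono_indep_V:
  fixes c :: "'x multiset \<Rightarrow> 'f::field"
  assumes inf: "infinite (UNIV :: 'f set)" and V: "finite V"
  shows "finite K \<Longrightarrow> (\<forall>m\<in>K. set_mset m \<subseteq> V) \<Longrightarrow>
    (\<forall>t. (\<Sum>m\<in>K. c m * prod_mset (image_mset t m)) = 0) \<Longrightarrow> \<forall>m\<in>K. c m = 0"
  using V
proof (induction V arbitrary: K c rule: finite_induct)
  case empty
  then have K: "K \<subseteq> {{#}}" by auto
  show ?case
  proof (cases "{#} \<in> K")
    case True
    then have "K = {{#}}" using K by auto
    then show ?thesis using empty.prems(3) by auto
  next
    case False then show ?thesis using K by auto
  qed
next
  case (insert x V)
  define R where "R t m = prod_mset (image_mset (t :: 'x \<Rightarrow> 'f) (filter_mset (\<lambda>y. y \<noteq> x) m))" for t m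
  define Kk where "Kk k = (\<lambda>m. filter_mset (\<lambda>y. y \<noteq> x) m) ` {m\<in>K. count m x = k}" for k
  define ck where "ck k m' = c (m' + replicate_mset k x)" for k m'
  have decomp: "m = filter_mset (\<lambda>y. y \<noteq> x) m + replicate_mset (count m x) x" for m :: "'x multiset"
    by (rule multiset_eqI) (auto simp: count_filter_mset)
  have coef: "(\<Sum>m\<in>{m\<in>K. count m x = k}. c m * R t m) = 0" for t k
  proof -
    define Q where "Q = (\<Sum>m\<in>K. monom (c m * R t m) (count m x))"
    have "poly Q y = 0" for y
    proof -
      have "poly Q y = (\<Sum>m\<in>K. c m * prod_mset (image_mset (t(x := y)) m))"
      proof (unfold Q_def poly_sum, rule sum.cong[OF refl])
        fix m
        have "prod_mset (image_mset (t(x := y)) m) =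
            (t(x := y)) x ^ count m x * R (t(x := y)) m"
          unfolding R_def by (rule prod_mset_split)
        also have "R (t(x := y)) m = R t m"
          unfolding R_def by (rule prod_mset_upd_notin) simp
        finally have P: "prod_mset (image_mset (t(x := y)) m) = y ^ count m x * R t m" by (simp only: fun_upd_same)
        show "poly (monom (c m * R t m) (count m x)) y = c m * prod_mset (image_mset (t(x := y)) m)"
          unfolding P by (simp add: poly_monom mult_ac)
      qed
      also have "\<dots> = 0" using insert.prems(3) by blast
      finally show ?thesis .
    qed
    then have "Q = 0" by (rule poly_zero_infinite[OF inf])
    then have "coeff Q k = 0" by simp
    moreover have "coeff Q k = (\<Sum>m\<in>K. if count m x = k then c m * R t m else 0)"
      unfolding Q_def coeff_sum by (simp add: eq_commute)
    moreover have "(\<Sum>m\<in>K. if count m x = k then c m * R t m else 0) = (\<Sum>m\<in>{m\<in>K. count m x = k}. c m * R t m)"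
      by (simp add: sum.inter_filter[OF insert.prems(1)])
    ultimately show ?thesis by simp
  qed
  have inj: "inj_on (\<lambda>m. filter_mset (\<lambda>y. y \<noteq> x) m) {m\<in>K. count m x = k}" for k
  proof (rule inj_onI)
    fix m1 m2 assume "m1 \<in> {m\<in>K. count m x = k}" "m2 \<in> {m\<in>K. count m x = k}"
      and e: "filter_mset (\<lambda>y. y \<noteq> x) m1 = filter_mset (\<lambda>y. y \<noteq> x) m2"
    then have "count m1 x = count m2 x" by simp
    then show "m1 = m2" using decomp[of m1] decomp[of m2] e by metis
  qed
  have IHapp: "\<forall>m'\<in>Kk k. ck k m' = 0" for k
  proof (rule insert.IH)
    show "finite (Kk k)" using insert.prems(1) by (simp add: Kk_def)
    show "\<forall>m\<in>Kk k. set_mset m \<subseteq> V" using insert.prems(2) by (auto simp: Kk_def)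
    show "\<forall>t. (\<Sum>m\<in>Kk k. ck k m * prod_mset (image_mset t m)) = 0"
    proof
      fix t
      have "(\<Sum>m\<in>Kk k. ck k m * prod_mset (image_mset t m)) =
          (\<Sum>m\<in>{m\<in>K. count m x = k}. ck k (filter_mset (\<lambda>y. y \<noteq> x) m) *
             prod_mset (image_mset t (filter_mset (\<lambda>y. y \<noteq> x) m)))"
        unfolding Kk_def by (rule sum.reindex[OF inj, unfolded comp_def])
      also have "\<dots> = (\<Sum>m\<in>{m\<in>K. count m x = k}. c m * R t m)"
      proof (rule sum.cong[OF refl])
        fix m assume "m \<in> {m\<in>K. count m x = k}"
        then have "filter_mset (\<lambda>y. y \<noteq> x) m + replicate_mset k x = m" using decomp[of m] by simp
        then show "ck k (filter_mset (\<lambda>y. y \<noteq> x) m) * prod_mset (image_mset t (filter_mset (\<lambda>y. y \<noteq> x) m)) = c m * R t m"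
          by (simp add: ck_def R_def)
      qed
      also have "\<dots> = 0" by (rule coef)
      finally show "(\<Sum>m\<in>Kk k. ck k m * prod_mset (image_mset t m)) = 0" .
    qed
  qed
  show ?case
  proof
    fix m assume m: "m \<in> K"
    have "filter_mset (\<lambda>y. y \<noteq> x) m \<in> Kk (count m x)" unfolding Kk_def using m by auto
    then have "ck (count m x) (filter_mset (\<lambda>y. y \<noteq> x) m) = 0" using IHapp by blast
    then show "c m = 0" unfolding ck_def using decomp[of m] by simp
  qed
qed

lemma mono_indep:
  fixes c :: "'x multiset \<Rightarrow> 'f::field"
  assumes inf: "infinite (UNIV :: 'f set)" and K: "finite K"
    and z: "\<And>t. (\<Sum>m\<in>K. c m * prod_mset (image_mset t m)) = 0"
  shows "\<forall>m\<in>K. c m = 0"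
  by (rule mono_indep_V[OF inf _ K, of "\<Union>m\<in>K. set_mset m"]) (use K z in auto)


definition munit :: "'n::finite \<Rightarrow> 'n \<Rightarrow> 'f::comm_ring_1^'n^'n" where
  "munit a b = (\<chi> r s. if r = a \<and> s = b then 1 else 0)"

lemma munit_entry[simp]: "munit a b $ r $ s = (if r = a \<and> s = b then 1 else 0)"
  by (simp add: munit_def)

lemma munit_mul: "munit a b ** munit c d = (if b = c then munit a d else (0 :: 'f::comm_ring_1^'n::finite^'n))"
proof -
  have "(munit a b ** munit c d) $ r $ s = (if b = c then munit a d else (0 :: 'f^'n^'n)) $ r $ s" for r s
  proof -
    have "(munit a b ** munit c d) $ r $ s = (\<Sum>k\<in>UNIV. (if r = a \<and> k = b then 1 else 0) * (if k = c \<and> s = d then 1 else (0::'f)))"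
      by (simp add: matrix_matrix_mult_def)
    also have "\<dots> = (\<Sum>k\<in>UNIV. (if k = b then (if r = a \<and> b = c \<and> s = d then 1 else 0) else (0::'f)))"
      by (rule sum.cong) auto
    also have "\<dots> = (if r = a \<and> b = c \<and> s = d then 1 else 0)" by simp
    finally show ?thesis by auto
  qed
  then show ?thesis by (simp add: vec_eq_iff)
qed

locale setting = mgroup G for G :: "'a monoid" (structure) +
  fixes gs :: "'n::finite \<Rightarrow> 'a"
  assumes gs_car: "\<And>i. gs i \<in> carrier G"
begin

lemma munit_EC: "(munit a b :: 'f::comm_ring_1^'n^'n) \<in> elem_comp G gs (inv (gs a) \<otimes> gs b)"
  by (auto simp: elem_comp_def)

lemma lw_take: "lw G w \<Longrightarrow> lw G (take j w)"
  unfolding lw_def by (meson dual_order.trans image_mono set_take_subset)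

lemma walk_vertices:
  fixes \<phi> :: "('a \<times> nat) \<Rightarrow> 'f::comm_ring_1^'n^'n"
  assumes \<phi>: "graded_assign G gs \<phi>"
  shows "lw G w \<Longrightarrow> mword \<phi> w $ r $ c \<noteq> 0 \<Longrightarrow> j \<le> length w \<Longrightarrow> \<exists>r'. gs r' = gs r \<otimes> wdeg G (take j w)"
proof (induction w arbitrary: r j)
  case Nil then show ?case using gs_car by (intro exI[of _ r]) simp
next
  case (Cons x xs)
  have "(\<Sum>k\<in>UNIV. \<phi> x $ r $ k * mword \<phi> xs $ k $ c) \<noteq> 0"
    using Cons.prems by (simp add: matrix_matrix_mult_def)
  then obtain k where "\<phi> x $ r $ k * mword \<phi> xs $ k $ c \<noteq> 0"
    using sum.not_neutral_contains_not_neutral by blast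
  then have nz: "\<phi> x $ r $ k \<noteq> 0" "mword \<phi> xs $ k $ c \<noteq> 0" by auto
  have x: "fst x \<in> carrier G" and xs: "lw G xs" using Cons.prems by auto
  have "\<phi> x \<in> elem_comp G gs (fst x)"
    using \<phi> x unfolding graded_assign_def by (cases x) auto
  then have "inv (gs r) \<otimes> gs k = fst x" using nz(1) by (auto simp: elem_comp_def)
  then have gk: "gs k = gs r \<otimes> fst x" using gs_car x by (simp add: inv_solve_left')
  show ?case
  proof (cases j)
    case 0 then show ?thesis using gs_car by (intro exI[of _ r]) simp
  next
    case (Suc j')
    then have "j' \<le> length xs" using Cons.prems by simp
    then obtain r' where "gs r' = gs k \<otimes> wdeg G (take j' xs)"
      using Cons.IH[OF xs nz(2)] by blast
    then show ?thesis using Suc gk gs_car x wdeg_closed[OF lw_take[OF xs]]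
      by (intro exI[of _ r']) (simp add: m_assoc)
  qed
qed

lemma wdeg_snoc: "lw G u \<Longrightarrow> fst y \<in> carrier G \<Longrightarrow> wdeg G (u @ [y]) = wdeg G u \<otimes> fst y"
  using wdeg_append[of u "[y]"] by simp

lemma nondeg_surj:
  assumes nd: "nondegenerate G gs TYPE('f::comm_ring_1)"
  shows "range gs = carrier G"
proof (rule ccontr)
  assume "range gs \<noteq> carrier G"
  moreover have "range gs \<subseteq> carrier G" using gs_car by auto
  ultimately obtain t where t: "t \<in> carrier G" "t \<notin> range gs" by blast
  obtain ss where ss: "set ss = range gs" using finite_list[of "range gs"] by auto
  define k where "k = length ss"
  define pp where "pp j = (if j = 0 then \<one> else inv (ss ! (j - 1)) \<otimes> t)" for j
  define hs where "hs = map (\<lambda>j. inv (pp j) \<otimes> pp (Suc j)) [0..<k]"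
  define w where "w = zip hs [1..<Suc (length hs)]"
  have ssc: "i < k \<Longrightarrow> ss ! i \<in> carrier G" for i
    using ss gs_car k_def by (metis nth_mem rangeE)
  have ppc: "j \<le> k \<Longrightarrow> pp j \<in> carrier G" for j
    using ssc t by (cases j) (auto simp: pp_def)
  have lhs: "length hs = k" by (simp add: hs_def)
  have hsnth: "j < k \<Longrightarrow> hs ! j = inv (pp j) \<otimes> pp (Suc j)" for j by (simp add: hs_def)
  have hsc: "set hs \<subseteq> carrier G"
    using ppc by (auto simp: hs_def)
  have lw: "length w = k" by (simp add: w_def lhs)
  have "length hs = length [1..<Suc (length hs)]" by (simp only: length_upt)
  then have mf: "map fst w = hs" unfolding w_def by (rule map_fst_zip)
  have lww: "lw G w" unfolding lw_def using hsc mf by (metis list.set_map)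
  have wnth: "j < k \<Longrightarrow> fst (w ! j) = hs ! j" for j by (simp add: w_def lhs)
  have wd: "j \<le> k \<Longrightarrow> wdeg G (take j w) = pp j" for j
  proof (induction j)
    case 0 then show ?case by (simp add: pp_def)
  next
    case (Suc j)
    then have j: "j < k" by simp
    have "take (Suc j) w = take j w @ [w ! j]" using j lw by (simp add: take_Suc_conv_app_nth)
    moreover have "fst (w ! j) \<in> carrier G" using wnth[OF j] hsnth[OF j] ppc j by simp
    ultimately have "wdeg G (take (Suc j) w) = wdeg G (take j w) \<otimes> fst (w ! j)"
      using wdeg_snoc lw_take[OF lww] by simp
    also have "\<dots> = pp j \<otimes> (inv (pp j) \<otimes> pp (Suc j))" using Suc j wnth hsnth by simp
    also have "\<dots> = pp (Suc j)" using ppc j by simp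
    finally show ?case .
  qed
  have "graded_identity G gs (fmono w :: ('a,'f) fpoly)"
    unfolding graded_identity_def
  proof (intro conjI allI impI)
    show "fmono w \<in> free_alg G" by (rule fmono_free_alg[OF lww])
    fix \<phi> :: "('a \<times> nat) \<Rightarrow> 'f^'n^'n"
    assume \<phi>: "graded_assign G gs \<phi>"
    have "mword \<phi> w $ r $ c = 0" for r c
    proof (rule ccontr)
      assume nz: "mword \<phi> w $ r $ c \<noteq> 0"
      have "gs r \<in> set ss" using ss by simp
      then obtain i where i: "i < k" "ss ! i = gs r" by (auto simp: in_set_conv_nth k_def)
      obtain r' where "gs r' = gs r \<otimes> wdeg G (take (Suc i) w)"
        using walk_vertices[OF \<phi> lww nz, of "Suc i"] i lw by auto
      also have "\<dots> = t" using wd[of "Suc i"] i ssc t gs_car by (simp add: pp_def)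
      finally show False using t by auto
    qed
    then show "meval \<phi> (fmono w) = 0" by (simp add: meval_fmono vec_eq_iff)
  qed
  moreover have "set hs \<subseteq> carrier G" by (rule hsc)
  ultimately show False using nd unfolding nondegenerate_def w_def by blast
qed

lemma comm_inj:
  assumes ci: "graded_identity G gs (comm_e G :: ('a,'f::comm_ring_1) fpoly)"
  shows "inj gs"
proof (rule injI, rule ccontr)
  fix i j assume eq: "gs i = gs j" and ne: "i \<noteq> j"
  define \<phi> where "\<phi> x = (if x = (\<one>, 1::nat) then munit i i else if x = (\<one>, 2) then munit i j else (0 :: 'f^'n^'n))" for x
  have \<phi>: "graded_assign G gs \<phi>"
    unfolding graded_assign_def
  proof (intro ballI allI)
    fix g idx assume g: "g \<in> carrier G"
    have 1: "(munit i i :: 'f^'n^'n) \<in> elem_comp G gs \<one>" using munit_EC[of i i] gs_car by simp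
    have 2: "(munit i j :: 'f^'n^'n) \<in> elem_comp G gs \<one>" using munit_EC[of i j] gs_car eq by simp
    show "\<phi> (g, idx) \<in> elem_comp G gs g"
      using 1 2 by (auto simp: \<phi>_def EC_zero)
  qed
  have "meval \<phi> (comm_e G :: ('a,'f) fpoly) = 0" using ci \<phi> unfolding graded_identity_def by blast
  moreover have "meval \<phi> (comm_e G :: ('a,'f) fpoly) = munit i i ** munit i j - munit i j ** munit i i"
    unfolding comm_e_eq by (simp add: meval_fsub meval_fmono \<phi>_def)
  ultimately have "(munit i i ** munit i j - munit i j ** munit i i) $ i $ j = (0 :: 'f)" by simp
  then show False using ne by (simp add: munit_mul)
qed

end


lemma fa_fsub_fmono: "lw G a \<Longrightarrow> lw G b \<Longrightarrow> (fsub (fmono a) (fmono b) :: ('a,'f::comm_ring_1) fpoly) \<in> free_alg G"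
proof -
  assume a: "lw G a" and b: "lw G b"
  have s: "fsupp (fsub (fmono a) (fmono b) :: ('a,'f) fpoly) \<subseteq> {a, b}"
    by (auto simp: fsupp_def fsub_def fmono_def)
  show ?thesis unfolding free_alg_iff using finite_subset[OF s] s a b by auto
qed

locale bsetting = setting G gs for G :: "'a monoid" (structure) and gs :: "'n::finite \<Rightarrow> 'a" +
  assumes gs_inj: "inj gs" and gs_surj: "range gs = carrier G"
begin

definition col :: "'n \<Rightarrow> 'a \<Rightarrow> 'n" where
  "col r g = inv_into UNIV gs (gs r \<otimes> g)"

lemma col_gs: "g \<in> carrier G \<Longrightarrow> gs (col r g) = gs r \<otimes> g"
  unfolding col_def using gs_surj gs_car by (intro f_inv_into_f) auto

lemma col_eq: "g \<in> carrier G \<Longrightarrow> gs j = gs r \<otimes> g \<Longrightarrow> j = col r g"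
  unfolding col_def using gs_inj by (metis inv_into_f_f UNIV_I)

lemma EC_zero_entry:
  assumes X: "X \<in> elem_comp G gs g" and g: "g \<in> carrier G" and j: "j \<noteq> col r g"
  shows "X $ r $ j = 0"
proof (rule ccontr)
  assume "X $ r $ j \<noteq> 0"
  then have "inv (gs r) \<otimes> gs j = g" using X by (auto simp: elem_comp_def)
  then have "gs j = gs r \<otimes> g" using gs_car g by (simp add: inv_solve_left')
  then show False using col_eq[OF g] j by blast
qed

lemma EC_mul_entry:
  fixes X Y :: "'f::comm_ring_1^'n^'n"
  assumes X: "X \<in> elem_comp G gs g" and g: "g \<in> carrier G"
  shows "(X ** Y) $ r $ c = X $ r $ col r g * Y $ col r g $ c"
proof -
  have "(X ** Y) $ r $ c = (\<Sum>k\<in>UNIV. X $ r $ k * Y $ k $ c)" by (simp add: matrix_matrix_mult_def)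
  also have "\<dots> = (\<Sum>k\<in>UNIV. if k = col r g then X $ r $ col r g * Y $ col r g $ c else 0)"
    by (rule sum.cong) (auto simp: EC_zero_entry[OF X g])
  also have "\<dots> = X $ r $ col r g * Y $ col r g $ c" by simp
  finally show ?thesis .
qed

lemma col_col: "g \<in> carrier G \<Longrightarrow> col (col r g) (inv g) = r"
proof -
  assume g: "g \<in> carrier G"
  have "gs r = gs (col r g) \<otimes> inv g" using col_gs[OF g] gs_car g by (simp add: m_assoc)
  then show ?thesis using col_eq[of "inv g" r "col r g"] g by simp
qed

lemma gen_identity:
  assumes g: "g \<in> carrier G"
  shows "graded_identity G gs (gen_g G g :: ('a,'f::comm_ring_1) fpoly)"
  unfolding graded_identity_def
proof (intro conjI allI impI)
  show "gen_g G g \<in> free_alg G" unfolding gen_g_eq using g by (intro fa_fsub_fmono) auto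
  fix \<phi> :: "('a \<times> nat) \<Rightarrow> 'f^'n^'n" assume \<phi>: "graded_assign G gs \<phi>"
  define A where "A = \<phi> (g, 1)"
  define B where "B = \<phi> (inv g, 2)"
  define C where "C = \<phi> (g, 3)"
  have A: "A \<in> elem_comp G gs g" and C: "C \<in> elem_comp G gs g" and B: "B \<in> elem_comp G gs (inv g)"
    using \<phi> g unfolding graded_assign_def A_def B_def C_def by auto
  have ig: "inv g \<in> carrier G" using g by simp
  have "meval \<phi> (gen_g G g :: ('a,'f) fpoly) = A ** (B ** C) - C ** (B ** A)"
    unfolding gen_g_eq by (simp add: meval_fsub meval_fmono A_def B_def C_def)
  also have "\<dots> = 0"
  proof -
    have "(A ** (B ** C)) $ r $ c = (C ** (B ** A)) $ r $ c" for r c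
    proof -
      define j where "j = col r g"
      have cc: "col j (inv g) = r" unfolding j_def by (rule col_col[OF g])
      have 1: "(A ** (B ** C)) $ r $ c = A $ r $ j * (B $ j $ r * C $ r $ c)"
        using EC_mul_entry[OF A g] EC_mul_entry[OF B ig] cc j_def by simp
      have 2: "(C ** (B ** A)) $ r $ c = C $ r $ j * (B $ j $ r * A $ r $ c)"
        using EC_mul_entry[OF C g] EC_mul_entry[OF B ig] cc j_def by simp
      show ?thesis
      proof (cases "c = j")
        case True then show ?thesis using 1 2 by (simp add: mult_ac)
      next
        case False
        then have "A $ r $ c = 0" "C $ r $ c = 0"
          using EC_zero_entry[OF A g] EC_zero_entry[OF C g] j_def by auto
        then show ?thesis using 1 2 by simp
      qed
    qed
    then show ?thesis by (simp add: vec_eq_iff)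
  qed
  finally show "meval \<phi> (gen_g G g :: ('a,'f) fpoly) = 0" .
qed

end

context setting
begin

lemma TG_sub:
  assumes S: "\<And>s. s \<in> S \<Longrightarrow> graded_identity G gs (s :: ('a,'f::comm_ring_1) fpoly)"
  shows "p \<in> TG_ideal_gen G S \<Longrightarrow> graded_identity G gs p"
proof (induction rule: TG_ideal_gen.induct)
  case (gen s) then show ?case by (rule S)
next
  case zero then show ?case by (simp add: graded_identity_def fa_zero meval_zero)
next
  case (add p q)
  then have p: "p \<in> free_alg G" "\<forall>\<phi>. graded_assign G gs \<phi> \<longrightarrow> meval \<phi> p = 0"
    and q: "q \<in> free_alg G" "\<forall>\<phi>. graded_assign G gs \<phi> \<longrightarrow> meval \<phi> q = 0"
    by (simp_all add: graded_identity_def)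
  have fp: "finite (fsupp p)" and fq: "finite (fsupp q)" using p q by (simp_all add: free_alg_iff)
  show ?case unfolding graded_identity_def
  proof (intro conjI allI impI)
    show "fadd p q \<in> free_alg G" by (rule fa_fadd[OF p(1) q(1)])
    fix \<phi> :: "('a \<times> nat) \<Rightarrow> 'f^'n^'n" assume "graded_assign G gs \<phi>"
    then show "meval \<phi> (fadd p q) = 0" using p(2) q(2) by (simp add: meval_fadd[OF fp fq])
  qed
next
  case (smult p c)
  then have p: "p \<in> free_alg G" "\<forall>\<phi>. graded_assign G gs \<phi> \<longrightarrow> meval \<phi> p = 0"
    by (simp_all add: graded_identity_def)
  have fp: "finite (fsupp p)" using p by (simp_all add: free_alg_iff)
  have z: "msmult c 0 = (0 :: 'f^'n^'n)" by (simp add: vec_eq_iff)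
  show ?case unfolding graded_identity_def
  proof (intro conjI allI impI)
    show "fsmult c p \<in> free_alg G" by (rule fa_fsmult[OF p(1)])
    fix \<phi> :: "('a \<times> nat) \<Rightarrow> 'f^'n^'n" assume "graded_assign G gs \<phi>"
    then show "meval \<phi> (fsmult c p) = 0" using p(2) z by (simp add: meval_fsmult[OF fp])
  qed
next
  case (lmul q p)
  then have p: "p \<in> free_alg G" "\<forall>\<phi>. graded_assign G gs \<phi> \<longrightarrow> meval \<phi> p = 0"
    by (simp_all add: graded_identity_def)
  have q: "q \<in> free_alg G" by fact
  have fp: "finite (fsupp p)" and fq: "finite (fsupp q)" using p q by (simp_all add: free_alg_iff)
  show ?case unfolding graded_identity_def
  proof (intro conjI allI impI)
    show "fmul q p \<in> free_alg G" by (rule fa_fmul[OF q p(1)])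
    fix \<phi> :: "('a \<times> nat) \<Rightarrow> 'f^'n^'n" assume "graded_assign G gs \<phi>"
    then show "meval \<phi> (fmul q p) = 0" using p(2) by (simp add: meval_fmul[OF fq fp])
  qed
next
  case (rmul q p)
  then have p: "p \<in> free_alg G" "\<forall>\<phi>. graded_assign G gs \<phi> \<longrightarrow> meval \<phi> p = 0"
    by (simp_all add: graded_identity_def)
  have q: "q \<in> free_alg G" by fact
  have fp: "finite (fsupp p)" and fq: "finite (fsupp q)" using p q by (simp_all add: free_alg_iff)
  show ?case unfolding graded_identity_def
  proof (intro conjI allI impI)
    show "fmul p q \<in> free_alg G" by (rule fa_fmul[OF p(1) q])
    fix \<phi> :: "('a \<times> nat) \<Rightarrow> 'f^'n^'n" assume "graded_assign G gs \<phi>"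
    then show "meval \<phi> (fmul p q) = 0" using p(2) by (simp add: meval_fmul[OF fp fq])
  qed
next
  case (endo \<sigma> p)
  have pf: "p \<in> free_alg G" using endo.IH by (simp add: graded_identity_def)
  have \<sigma>f: "\<sigma> x \<in> free_alg G" if "fst x \<in> carrier G" for x
    using endo.hyps(1) that unfolding graded_endo_def by (cases x) auto
  show ?case unfolding graded_identity_def
  proof (intro conjI allI impI)
    show "fsubst \<sigma> p \<in> free_alg G" by (rule fa_fsubst[OF pf \<sigma>f])
    fix \<phi> :: "('a \<times> nat) \<Rightarrow> 'f^'n^'n" assume \<phi>: "graded_assign G gs \<phi>"
    have fi: "finite (fsupp (\<sigma> x))" if "w \<in> fsupp p" "x \<in> set w" for w x
    proof -
      have "fst x \<in> carrier G" using pf that by (auto simp: free_alg_iff lw_def)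
      then show ?thesis using \<sigma>f by (simp add: free_alg_iff)
    qed
    have "meval \<phi> (fsubst \<sigma> p) = meval (\<lambda>x. meval \<phi> (\<sigma> x)) p"
      by (rule meval_fsubst) (use pf fi in \<open>auto simp: free_alg_iff\<close>)
    moreover have "graded_assign G gs (\<lambda>x. meval \<phi> (\<sigma> x))"
      unfolding graded_assign_def
    proof (intro ballI allI)
      fix g i assume g: "g \<in> carrier G"
      show "meval \<phi> (\<sigma> (g, i)) \<in> elem_comp G gs g"
        by (rule meval_EC[OF gs_car \<phi>]) (use endo.hyps(1) g in \<open>auto simp: graded_endo_def\<close>)
    qed
    ultimately show "meval \<phi> (fsubst \<sigma> p) = 0" using endo.IH by (simp add: graded_identity_def)
  qed
qed

end


lemma J_fun_sum:
  "finite I \<Longrightarrow> (\<And>i. i \<in> I \<Longrightarrow> f i \<in> TG_ideal_gen G S) \<Longrightarrow>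
   (\<lambda>u. \<Sum>i\<in>I. f i u) \<in> TG_ideal_gen G (S :: ('a,'f::comm_ring_1) fpoly set)"
proof (induction I rule: finite_induct)
  case empty then show ?case by (simp add: TG_ideal_gen.zero)
next
  case (insert i I)
  show ?case unfolding fun_sum_insert[OF insert(2) insert(1)]
    by (rule TG_ideal_gen.add) (use insert in auto)
qed

context bsetting
begin

definition phit :: "(('a \<times> nat) \<times> 'a \<Rightarrow> 'f::comm_ring_1) \<Rightarrow> ('a \<times> nat) \<Rightarrow> 'f^'n^'n" where
  "phit t x = (\<chi> r k. if k = col r (fst x) then t (x, gs r) else 0)"

lemma phit_entry[simp]: "phit t x $ r $ k = (if k = col r (fst x) then t (x, gs r) else 0)"
  by (simp add: phit_def)

lemma phit_EC: "g \<in> carrier G \<Longrightarrow> phit t (g, i) \<in> elem_comp G gs g"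
  unfolding elem_comp_def
proof (intro CollectI allI impI)
  fix r k assume g: "g \<in> carrier G" and "phit t (g, i) $ r $ k \<noteq> 0"
  then have "k = col r g" by (auto split: if_splits)
  then have "gs k = gs r \<otimes> g" using col_gs[OF g] by simp
  then show "inv (gs r) \<otimes> gs k = g" using gs_car g by (simp add: inv_solve_left')
qed

lemma phit_graded: "graded_assign G gs (phit t)"
  unfolding graded_assign_def using phit_EC by blast

lemma col_one: "col r \<one> = r"
  using col_eq[of \<one> r r] gs_car by simp

lemma col_assoc: "g \<in> carrier G \<Longrightarrow> h \<in> carrier G \<Longrightarrow> col (col r g) h = col r (g \<otimes> h)"
  unfolding col_def[of "col r g"] using col_gs[of g r] gs_car
  by (simp add: m_assoc col_def)

lemma mword_phit:
  "lw G w \<Longrightarrow> mword (phit t) w $ r $ c =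
     (if c = col r (wdeg G w) then prod_mset (image_mset t (em G (gs r) w)) else 0)"
proof (induction w arbitrary: r)
  case Nil then show ?case by (simp add: mat_def col_one eq_commute)
next
  case (Cons x xs)
  have x: "fst x \<in> carrier G" and xs: "lw G xs" using Cons.prems by auto
  define k0 where "k0 = col r (fst x)"
  have gk0: "gs k0 = gs r \<otimes> fst x" using col_gs[OF x] k0_def by simp
  have px: "phit t x \<in> elem_comp G gs (fst x)" using phit_EC[OF x, of t "snd x"] by simp
  have "mword (phit t) (x # xs) $ r $ c = phit t x $ r $ k0 * mword (phit t) xs $ k0 $ c"
    using EC_mul_entry[OF px x, of "mword (phit t) xs" r c] k0_def by simp
  also have "\<dots> = t (x, gs r) * (if c = col k0 (wdeg G xs) then prod_mset (image_mset t (em G (gs k0) xs)) else 0)"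
    using Cons.IH[OF xs] k0_def by simp
  also have "col k0 (wdeg G xs) = col r (wdeg G (x # xs))"
    using col_assoc[OF x wdeg_closed[OF xs]] k0_def by simp
  finally show ?case using gk0 by simp
qed

lemma row_sum_phit:
  "lw G w \<Longrightarrow> (\<Sum>c\<in>UNIV. mword (phit t) w $ r $ c) = prod_mset (image_mset t (em G (gs r) w))"
  by (simp add: mword_phit)

lemma identity_coeffs:
  fixes p :: "('a,'f::field) fpoly"
  assumes inf: "infinite (UNIV :: 'f set)" and pid: "graded_identity G gs p"
  shows "\<forall>m\<in>em G \<one> ` fsupp p. (\<Sum>w\<in>{w\<in>fsupp p. em G \<one> w = m}. p w) = 0"
proof -
  have pf: "p \<in> free_alg G" using pid by (simp add: graded_identity_def)
  then have fin: "finite (fsupp p)" and lwp: "\<And>w. w \<in> fsupp p \<Longrightarrow> lw G w"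
    by (auto simp: free_alg_iff)
  define r0 where "r0 = inv_into UNIV gs \<one>"
  have gr0: "gs r0 = \<one>" unfolding r0_def using gs_surj by (intro f_inv_into_f) auto
  have T: "(\<Sum>w\<in>fsupp p. p w * prod_mset (image_mset t (em G \<one> w))) = 0" for t
  proof -
    have "meval (phit t) p = 0"
      using pid[unfolded graded_identity_def, THEN conjunct2, rule_format, OF phit_graded[of t]] .
    then have "0 = (\<Sum>c\<in>UNIV. meval (phit t) p $ r0 $ c)" by simp
    also have "\<dots> = (\<Sum>c\<in>UNIV. \<Sum>w\<in>fsupp p. p w * mword (phit t) w $ r0 $ c)"
      by (simp add: meval_entry[OF fin])
    also have "\<dots> = (\<Sum>w\<in>fsupp p. \<Sum>c\<in>UNIV. p w * mword (phit t) w $ r0 $ c)"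
      by (rule sum.swap)
    also have "\<dots> = (\<Sum>w\<in>fsupp p. p w * prod_mset (image_mset t (em G \<one> w)))"
      by (rule sum.cong[OF refl]) (simp add: sum_distrib_left[symmetric] row_sum_phit lwp gr0)
    finally show ?thesis by simp
  qed
  show ?thesis
  proof (rule mono_indep[OF inf])
    show "finite (em G \<one> ` fsupp p)" using fin by simp
    fix t
    have "(\<Sum>m\<in>em G \<one> ` fsupp p. (\<Sum>w\<in>{w\<in>fsupp p. em G \<one> w = m}. p w) * prod_mset (image_mset t m))
        = (\<Sum>m\<in>em G \<one> ` fsupp p. \<Sum>w\<in>{w\<in>fsupp p. em G \<one> w = m}. p w * prod_mset (image_mset t (em G \<one> w)))"
      by (rule sum.cong[OF refl]) (simp add: sum_distrib_right)
    also have "\<dots> = (\<Sum>w\<in>fsupp p. p w * prod_mset (image_mset t (em G \<one> w)))"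
      by (rule sum.image_gen[OF fin, symmetric])
    also have "\<dots> = 0" by (rule T)
    finally show "(\<Sum>m\<in>em G \<one> ` fsupp p. (\<Sum>w\<in>{w\<in>fsupp p. em G \<one> w = m}. p w) * prod_mset (image_mset t m)) = 0" .
  qed
qed

lemma identities_in_TG:
  fixes p :: "('a,'f::field) fpoly"
  assumes inf: "infinite (UNIV :: 'f set)" and pid: "graded_identity G gs p"
    and cS: "comm_e G \<in> SS" and gS: "\<And>g. g \<in> carrier G \<Longrightarrow> g \<noteq> \<one> \<Longrightarrow> gen_g G g \<in> SS"
  shows "p \<in> TG_ideal_gen G SS"
proof -
  interpret W: walk_eq G "weq G SS TYPE('f)"
  proof unfold_locales
    show "weq G SS TYPE('f) w w" for w by (rule weq_refl)
    show "weq G SS TYPE('f) w' w" if "weq G SS TYPE('f) w w'" for w w' using that by (rule weq_sym)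
    show "weq G SS TYPE('f) u w" if "weq G SS TYPE('f) u v" "weq G SS TYPE('f) v w" for u v w
      using that by (rule weq_trans)
    show "weq G SS TYPE('f) (u @ w @ v) (u @ w' @ v)" if "lw G u" "lw G v" "weq G SS TYPE('f) w w'"
      for u v w w' using that by (rule weq_ctx)
    show "weq G SS TYPE('f) (s @ t) (t @ s)" if "lw G s" "lw G t" "wdeg G s = \<one>" "wdeg G t = \<one>" for s t
      using R1[OF is_group cS] that by blast
    show "weq G SS TYPE('f) (s @ z @ t) (t @ z @ s)" if "g \<in> carrier G" "g \<noteq> \<one>" "lw G s" "lw G z"
      "lw G t" "wdeg G s = g" "wdeg G z = inv g" "wdeg G t = g" for g s z t
      using R2[OF is_group that(1) gS[OF that(1,2)]] that by blast
  qed
  have pf: "p \<in> free_alg G" using pid by (simp add: graded_identity_def)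
  then have fin: "finite (fsupp p)" and lwp: "\<And>w. w \<in> fsupp p \<Longrightarrow> lw G w"
    by (auto simp: free_alg_iff)
  define P where "P = fsupp p"
  define fr where "fr m = (SOME w0. w0 \<in> P \<and> em G \<one> w0 = m)" for m
  define rep where "rep w = fr (em G \<one> w)" for w
  have rep: "rep w \<in> P \<and> em G \<one> (rep w) = em G \<one> w" if "w \<in> P" for w
    unfolding rep_def fr_def by (rule someI[of _ w]) (use that in simp)
  have co: "(\<Sum>w'\<in>{w'\<in>P. em G \<one> w' = em G \<one> w}. p w') = 0" if "w \<in> P" for w
    using identity_coeffs[OF inf pid] P_def that by blast
  define X where "X = (\<lambda>u. \<Sum>w\<in>P. fsmult (p w) (fsub (fmono w) (fmono (rep w))) u)"
  have XJ: "X \<in> TG_ideal_gen G SS"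
    unfolding X_def
  proof (rule J_fun_sum)
    show "finite P" using fin P_def by simp
    fix w assume w: "w \<in> P"
    have "weq G SS TYPE('f) w (rep w)"
      using W.em_eq_E[OF one_closed lwp lwp] w rep[OF w] P_def by auto
    then show "fsmult (p w) (fsub (fmono w) (fmono (rep w))) \<in> TG_ideal_gen G SS"
      unfolding weq_def by (rule TG_ideal_gen.smult)
  qed
  have "X = p"
  proof
    fix u
    have s1: "(\<Sum>w\<in>P. p w * fmono w u) = p u"
    proof -
      have "(\<Sum>w\<in>P. p w * fmono w u) = (\<Sum>w\<in>P. if w = u then p u else 0)"
        by (rule sum.cong) (auto simp: fmono_def)
      also have "\<dots> = p u" using fin P_def by (simp add: fsupp_def)
      finally show ?thesis .
    qed
    have s2: "(\<Sum>w\<in>P. p w * fmono (rep w) u) = 0"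
    proof -
      have "(\<Sum>w\<in>P. p w * fmono (rep w) u) =
          (\<Sum>m\<in>em G \<one> ` P. \<Sum>w\<in>{w\<in>P. em G \<one> w = m}. p w * fmono (rep w) u)"
        by (rule sum.image_gen) (use fin P_def in simp)
      also have "\<dots> = (\<Sum>m\<in>em G \<one> ` P. (\<Sum>w\<in>{w\<in>P. em G \<one> w = m}. p w) * fmono (fr m) u)"
        by (rule sum.cong[OF refl]) (auto simp: sum_distrib_right rep_def intro!: sum.cong)
      also have "\<dots> = 0"
      proof (rule sum.neutral, rule ballI)
        fix m assume "m \<in> em G \<one> ` P"
        then obtain w where "w \<in> P" "m = em G \<one> w" by blast
        then show "(\<Sum>w\<in>{w\<in>P. em G \<one> w = m}. p w) * fmono (fr m) u = 0" using co by simp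
      qed
      finally show ?thesis .
    qed
    have "X u = (\<Sum>w\<in>P. p w * fmono w u) - (\<Sum>w\<in>P. p w * fmono (rep w) u)"
      by (simp add: X_def fsmult_def fsub_def right_diff_distrib sum_subtractf)
    then show "X u = p u" using s1 s2 by simp
  qed
  then show ?thesis using XJ by simp
qed

lemma strong:
  assumes g: "g \<in> carrier G" and h: "h \<in> carrier G"
  shows "prod_span (elem_comp G gs g) (elem_comp G gs h) = (elem_comp G gs (g \<otimes> h) :: ('f::comm_ring_1^'n^'n) set)"
proof
  show "prod_span (elem_comp G gs g) (elem_comp G gs h) \<subseteq> (elem_comp G gs (g \<otimes> h) :: ('f^'n^'n) set)"
  proof
    fix X :: "'f^'n^'n" assume "X \<in> prod_span (elem_comp G gs g) (elem_comp G gs h)"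
    then obtain m and c :: "nat \<Rightarrow> 'f" and A B :: "nat \<Rightarrow> 'f^'n^'n" where X: "X = (\<Sum>k<m. msmult (c k) (A k ** B k))"
      and AB: "\<forall>k<m. A k \<in> elem_comp G gs g \<and> B k \<in> elem_comp G gs h"
      unfolding prod_span_def by blast
    show "X \<in> elem_comp G gs (g \<otimes> h)"
      unfolding X using AB by (intro EC_sum EC_msmult EC_mul[OF gs_car]) auto
  qed
next
  show "(elem_comp G gs (g \<otimes> h) :: ('f^'n^'n) set) \<subseteq> prod_span (elem_comp G gs g) (elem_comp G gs h)"
  proof
    fix X :: "'f^'n^'n" assume X: "X \<in> elem_comp G gs (g \<otimes> h)"
    have gh: "g \<otimes> h \<in> carrier G" using g h by simp
    obtain e where e: "bij_betw e {0..<card (UNIV :: 'n set)} (UNIV :: 'n set)"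
      using ex_bij_betw_nat_finite[of "UNIV :: 'n set"] by auto
    define m where "m = card (UNIV :: 'n set)"
    define c where "c k = X $ e k $ col (e k) (g \<otimes> h)" for k
    define A where "A k = (munit (e k) (col (e k) g) :: 'f^'n^'n)" for k
    define B where "B k = (munit (col (e k) g) (col (e k) (g \<otimes> h)) :: 'f^'n^'n)" for k
    have A: "A k \<in> elem_comp G gs g" for k
      using munit_EC[of "e k" "col (e k) g"] col_gs[OF g] gs_car g unfolding A_def by simp
    have B: "B k \<in> elem_comp G gs h" for k
    proof -
      have "inv (gs (col (e k) g)) \<otimes> gs (col (e k) (g \<otimes> h)) = h"
        using col_gs[OF g] col_gs[OF gh] gs_car g h by (simp add: inv_mult_group m_assoc)
      then show ?thesis using munit_EC[of "col (e k) g" "col (e k) (g \<otimes> h)"] unfolding B_def by simp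
    qed
    have "(\<Sum>k<m. msmult (c k) (A k ** B k)) = (\<Sum>k\<in>{0..<m}. msmult (c k) (munit (e k) (col (e k) (g \<otimes> h))))"
      by (simp add: A_def B_def munit_mul atLeast0LessThan)
    also have "\<dots> = (\<Sum>a\<in>UNIV. msmult (X $ a $ col a (g \<otimes> h)) (munit a (col a (g \<otimes> h))))"
      unfolding c_def m_def by (rule sum.reindex_bij_betw[OF e])
    also have "\<dots> = X"
    proof -
      have "(\<Sum>a\<in>UNIV. msmult (X $ a $ col a (g \<otimes> h)) (munit a (col a (g \<otimes> h)) :: 'f^'n^'n)) $ r $ s = X $ r $ s" for r s
      proof -
        have "(\<Sum>a\<in>UNIV. msmult (X $ a $ col a (g \<otimes> h)) (munit a (col a (g \<otimes> h)) :: 'f^'n^'n)) $ r $ s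
            = (\<Sum>a\<in>UNIV. if a = r then X $ r $ col r (g \<otimes> h) * (if s = col r (g \<otimes> h) then 1 else 0) else 0)"
          unfolding sum_component msmult_entry munit_entry by (rule sum.cong) auto
        also have "\<dots> = X $ r $ col r (g \<otimes> h) * (if s = col r (g \<otimes> h) then 1 else 0)" by simp
        also have "\<dots> = X $ r $ s" using EC_zero_entry[OF X gh, of s r] by auto
        finally show ?thesis .
      qed
      then show ?thesis by (simp add: vec_eq_iff)
    qed
    finally have "X = (\<Sum>k<m. msmult (c k) (A k ** B k))" by simp
    then show "X \<in> prod_span (elem_comp G gs g) (elem_comp G gs h)"
      unfolding prod_span_def using A B by blast
  qed
qed

lemma card_eq: "card (carrier G) = CARD('n)"
proof -
  have "card (range gs) = card (UNIV :: 'n set)" using gs_inj by (simp add: card_image)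
  then show ?thesis using gs_surj by simp
qed

end


theorem mainTheorem5:
  fixes G :: "'a monoid" and gs :: "'n::finite \<Rightarrow> 'a"
  assumes "group G" and "finite (carrier G)"
    and "infinite (UNIV :: 'f::field set)"
    and "\<forall>i. gs i \<in> carrier G"
    and "graded_identity G gs (comm_e G :: ('a,'f) fpoly)"
    and "nondegenerate G gs TYPE('f)"
  shows "TG_ideal_gen G ({comm_e G :: ('a,'f) fpoly} \<union>
            {gen_g G g | g. g \<in> carrier G \<and> g \<noteq> \<one>\<^bsub>G\<^esub> \<and> elem_comp G gs g \<noteq> ({0} :: ('f^'n^'n) set)})
         = {p :: ('a,'f) fpoly. graded_identity G gs p}
         \<and> strong_grading G gs TYPE('f)
         \<and> card (carrier G) = CARD('n)"
proof -
  have "setting G gs" unfolding setting_def setting_axioms_def mgroup_def using assms(1,4) by auto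
  then interpret S: setting G gs .
  have surj: "range gs = carrier G" by (rule S.nondeg_surj[OF assms(6)])
  have inj: "inj gs" by (rule S.comm_inj[OF assms(5)])
  interpret B: bsetting G gs
    by unfold_locales (rule inj, rule surj)
  define SS where "SS = ({comm_e G :: ('a,'f) fpoly} \<union>
            {gen_g G g | g. g \<in> carrier G \<and> g \<noteq> \<one>\<^bsub>G\<^esub> \<and> elem_comp G gs g \<noteq> ({0} :: ('f^'n^'n) set)})"
  have nz: "elem_comp G gs g \<noteq> ({0} :: ('f^'n^'n) set)" if g: "g \<in> carrier G" for g
  proof
    assume e: "elem_comp G gs g = ({0} :: ('f^'n^'n) set)"
    define r :: 'n where "r = undefined"
    have "(munit r (B.col r g) :: 'f^'n^'n) \<in> elem_comp G gs g"
      using S.munit_EC[of r "B.col r g"] B.col_gs[OF g] S.gs_car g by simp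
    then have "(munit r (B.col r g) :: 'f^'n^'n) = 0" using e by simp
    then have "(munit r (B.col r g) :: 'f^'n^'n) $ r $ B.col r g = 0" by simp
    then show False by simp
  qed
  have 1: "TG_ideal_gen G SS = {p. graded_identity G gs p}"
  proof
    show "TG_ideal_gen G SS \<subseteq> {p. graded_identity G gs p}"
    proof
      fix p assume "p \<in> TG_ideal_gen G SS"
      then have "graded_identity G gs p"
      proof (rule S.TG_sub[rotated])
        fix s assume "s \<in> SS"
        then show "graded_identity G gs s"
          unfolding SS_def using assms(5) B.gen_identity by auto
      qed
      then show "p \<in> {p. graded_identity G gs p}" by simp
    qed
  next
    show "{p. graded_identity G gs p} \<subseteq> TG_ideal_gen G SS"
    proof
      fix p assume "p \<in> {p. graded_identity G gs (p :: ('a,'f) fpoly)}"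
      then show "p \<in> TG_ideal_gen G SS"
        by (intro B.identities_in_TG[OF assms(3)]) (auto simp: SS_def nz)
    qed
  qed
  have 2: "strong_grading G gs TYPE('f)"
    unfolding strong_grading_def using B.strong by blast
  show ?thesis using 1 2 B.card_eq unfolding SS_def by blast
qed


end
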